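(* Let $n,m$ be positive integers and let $\Phi$ be an $m\times n$ random matrix whose entries are independent and each equal to $+1/\sqrt{m}$ or $-1/\sqrt{m}$ with probability $1/2$ each. For a nonzero $x\in\mathbb{R}^n$ define the distortion $$E(x) = \frac{\|\Phi x\|_2^2}{\|x\|_2^2} - 1 .$$ Then: (a) For every positive integer $q$, the moment $\mathbf{E}\,E(x)^q$ depends on $x$ only through $(x_1^2,\ldots,x_n^2)$, the quantity $\|x\|_2^{2q}\,\mathbf{E}\,E(x)^q$ is a polynomial in $(x_1^2,\ldots,x_n^2)$, and $\mathbf{E}\,E(x)^q$ is a Schur-concave function of $(x_1^2,\ldots,x_n^2)$. (b) Let $K=\|x\|_0$ be the number of nonzero coordinates of $x$, let $B\sim\mathsf{Binom}(K,1/2)$, and let $Z_1,\ldots,Z_m$ be i.i.d. copies of the standardized variable $\frac{B-\mathbf{E}B}{\sqrt{\mathbf{Var}[B]}}$. Define $$E_* = \frac{1}{m}\sum_{i=1}^m (Z_i^2-1).$$ Then for every integer $q\ge 2$, $$\mathbf{E}\,E(x)^q \le \mathbf{E}\,E_*^q,$$ with equality when all components of $x$ are equal.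
   Context: A function $f:D\to\mathbb{R}$ on a symmetric domain $D\subseteq\mathbb{R}^n$ is Schur-concave if $f(a)\ge f(b)$ whenever $a$ is majorized by $b$ (i.e. $a\prec b$: the sum of the $k$ largest entries of $a$ is at most that of $b$ for every $k$, with equal total sums). $\|x\|_0$ denotes the number of nonzero coordinates of $x$. *)

theory Defs
  imports "HOL-Probability.Probability"
begin

(* Vectors in R^n are functions nat => real; only coordinates j < n matter. *)

definition nonzero_vec :: "nat \<Rightarrow> (nat \<Rightarrow> real) \<Rightarrow> bool" where
  "nonzero_vec n x \<longleftrightarrow> (\<exists>j<n. x j \<noteq> 0)"

definition l0 :: "nat \<Rightarrow> (nat \<Rightarrow> real) \<Rightarrow> nat" where
  "l0 n x = card {j. j < n \<and> x j \<noteq> 0}"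

definition signmats :: "nat \<Rightarrow> nat \<Rightarrow> (nat \<Rightarrow> nat \<Rightarrow> real) set" where
  "signmats m n = {S. \<forall>i j. if i < m \<and> j < n then S i j \<in> {-1, 1} else S i j = 0}"

(* the random matrix Phi: uniform over sign matrices, scaled by 1/sqrt m *)
definition Phi_of :: "nat \<Rightarrow> (nat \<Rightarrow> nat \<Rightarrow> real) \<Rightarrow> nat \<Rightarrow> nat \<Rightarrow> real" where
  "Phi_of m S i j = S i j / sqrt (real m)"

definition distortion :: "nat \<Rightarrow> nat \<Rightarrow> (nat \<Rightarrow> nat \<Rightarrow> real) \<Rightarrow> (nat \<Rightarrow> real) \<Rightarrow> real" where
  "distortion m n S x =
     (\<Sum>i<m. (\<Sum>j<n. Phi_of m S i j * x j)\<^sup>2) / (\<Sum>j<n. (x j)\<^sup>2) - 1"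

definition moment :: "nat \<Rightarrow> nat \<Rightarrow> nat \<Rightarrow> (nat \<Rightarrow> real) \<Rightarrow> real" where
  "moment m n q x =
     measure_pmf.expectation (pmf_of_set (signmats m n)) (\<lambda>S. (distortion m n S x) ^ q)"

(* E [ E_*^q ]: Z_i = (B_i - E B)/sqrt(Var B), B_i iid Binom(K,1/2), E B = K/2, Var B = K/4 *)
definition estar_moment :: "nat \<Rightarrow> nat \<Rightarrow> nat \<Rightarrow> real" where
  "estar_moment m K q =
     measure_pmf.expectation (Pi_pmf {..<m} 0 (\<lambda>_. binomial_pmf K (1/2)))
       (\<lambda>B. ((1 / real m) * (\<Sum>i<m. ((real (B i) - real K / 2) / sqrt (real K / 4))\<^sup>2 - 1)) ^ q)"

definition poly_fun :: "nat \<Rightarrow> ((nat \<Rightarrow> real) \<Rightarrow> real) \<Rightarrow> bool" where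
  "poly_fun n P \<longleftrightarrow> (\<exists>A c. finite A \<and> (\<forall>\<alpha>\<in>A. \<forall>j\<ge>n. \<alpha> j = (0::nat)) \<and>
       (\<forall>a. P a = (\<Sum>\<alpha>\<in>A. c \<alpha> * (\<Prod>j<n. a j ^ \<alpha> j))))"

definition top_sum :: "nat \<Rightarrow> (nat \<Rightarrow> real) \<Rightarrow> nat \<Rightarrow> real" where
  "top_sum n a k = sum_list (take k (rev (sort (map a [0..<n]))))"

definition majorized :: "nat \<Rightarrow> (nat \<Rightarrow> real) \<Rightarrow> (nat \<Rightarrow> real) \<Rightarrow> bool" where
  "majorized n a b \<longleftrightarrow> (\<forall>k\<le>n. top_sum n a k \<le> top_sum n b k) \<and> (\<Sum>j<n. a j) = (\<Sum>j<n. b j)"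

definition schur_concave_on :: "nat \<Rightarrow> (nat \<Rightarrow> real) set \<Rightarrow> ((nat \<Rightarrow> real) \<Rightarrow> real) \<Rightarrow> bool" where
  "schur_concave_on n D f \<longleftrightarrow> (\<forall>a\<in>D. \<forall>b\<in>D. majorized n a b \<longrightarrow> f a \<ge> f b)"

(* domain of (x_1^2,...,x_n^2) for nonzero x: nonnegative, not all zero (symmetric) *)
definition sq_domain :: "nat \<Rightarrow> (nat \<Rightarrow> real) set" where
  "sq_domain n = {a. (\<forall>j<n. a j \<ge> 0) \<and> (\<forall>j\<ge>n. a j = 0) \<and> (\<exists>j<n. a j \<noteq> 0)}"

end

theory Submission
  imports Defs
begin


definition flipS :: "nat \<Rightarrow> nat \<Rightarrow> (nat \<Rightarrow> nat \<Rightarrow> real) \<Rightarrow> nat \<Rightarrow> nat \<Rightarrow> real" where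
  "flipS i j S = S(i := (S i)(j := - S i j))"

lemma signmats_E: "S \<in> signmats m n \<Longrightarrow> (if i < m \<and> j < n then S i j \<in> {-1, 1} else S i j = 0)"
  unfolding signmats_def by blast

lemma signmats_D: "S \<in> signmats m n \<Longrightarrow> i < m \<Longrightarrow> j < n \<Longrightarrow> S i j = 1 \<or> S i j = -1"
  using signmats_E[of S m n i j] by auto

lemma signmats_D0: "S \<in> signmats m n \<Longrightarrow> \<not> (i < m \<and> j < n) \<Longrightarrow> S i j = 0"
  using signmats_E[of S m n i j] by auto

lemma signmats_sq: "S \<in> signmats m n \<Longrightarrow> i < m \<Longrightarrow> j < n \<Longrightarrow> S i j * S i j = 1"
  using signmats_D by fastforce

lemma signmats_I: "(\<And>i j. i < m \<Longrightarrow> j < n \<Longrightarrow> S i j = 1 \<or> S i j = -1) \<Longrightarrow>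
   (\<And>i j. \<not> (i < m \<and> j < n) \<Longrightarrow> S i j = 0) \<Longrightarrow> S \<in> signmats m n"
  unfolding signmats_def by auto

lemma flipS_in: "S \<in> signmats m n \<Longrightarrow> i < m \<Longrightarrow> j < n \<Longrightarrow> flipS i j S \<in> signmats m n"
proof (rule signmats_I)
  fix i' j' assume "S \<in> signmats m n" "i' < m" "j' < n"
  then show "flipS i j S i' j' = 1 \<or> flipS i j S i' j' = -1"
    using signmats_D[of S m n i' j'] by (auto simp: flipS_def)
next
  fix i' j' assume "S \<in> signmats m n" "i < m" "j < n" "\<not> (i' < m \<and> j' < n)"
  then show "flipS i j S i' j' = 0"
    using signmats_D0[of S m n i' j'] by (auto simp: flipS_def)
qed

lemma flipS_flipS: "flipS i j (flipS i j S) = S"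
  by (auto simp: flipS_def fun_eq_iff)

lemma sum_invol:
  assumes "\<And>S. S \<in> A \<Longrightarrow> \<phi> S \<in> A" "\<And>S. S \<in> A \<Longrightarrow> \<phi> (\<phi> S) = S"
  shows "sum f A = sum (\<lambda>S. f (\<phi> S)) A"
  by (rule sum.reindex_bij_witness[of A \<phi> \<phi>]) (use assms in auto)

definition toS :: "nat \<Rightarrow> nat \<Rightarrow> (nat \<Rightarrow> nat \<Rightarrow> bool) \<Rightarrow> nat \<Rightarrow> nat \<Rightarrow> real" where
  "toS m n h = (\<lambda>i j. if i < m \<and> j < n then (if h i j then 1 else -1) else 0)"

definition Hset :: "nat \<Rightarrow> nat \<Rightarrow> (nat \<Rightarrow> nat \<Rightarrow> bool) set" where
  "Hset m n = PiE_dflt {..<m} (\<lambda>_. False) (\<lambda>_. PiE_dflt {..<n} False (\<lambda>_. UNIV))"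

lemma Hset_finite: "finite (Hset m n)"
  unfolding Hset_def by (intro finite_PiE_dflt) auto

lemma bij_toS: "bij_betw (toS m n) (Hset m n) (signmats m n)"
proof (rule bij_betw_byWitness[where f' = "\<lambda>S i j. i < m \<and> j < n \<and> S i j = 1"])
  show "\<forall>a\<in>Hset m n. (\<lambda>i j. i < m \<and> j < n \<and> toS m n a i j = 1) = a"
    by (auto simp: Hset_def PiE_dflt_def toS_def fun_eq_iff)
  show "\<forall>a'\<in>signmats m n. toS m n (\<lambda>i j. i < m \<and> j < n \<and> a' i j = 1) = a'"
  proof
    fix S assume S: "S \<in> signmats m n"
    show "toS m n (\<lambda>i j. i < m \<and> j < n \<and> S i j = 1) = S"
    proof (intro ext)
      fix i j show "toS m n (\<lambda>i j. i < m \<and> j < n \<and> S i j = 1) i j = S i j"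
        using signmats_D[OF S, of i j] signmats_D0[OF S, of i j] by (auto simp: toS_def)
    qed
  qed
  show "toS m n ` Hset m n \<subseteq> signmats m n"
    unfolding signmats_def toS_def by auto
  show "(\<lambda>a' i j. i < m \<and> j < n \<and> a' i j = 1) ` signmats m n \<subseteq> Hset m n"
    by (auto simp: Hset_def PiE_dflt_def)
qed

lemma signmats_finite: "finite (signmats m n)"
  using bij_betw_finite[OF bij_toS] Hset_finite by simp

lemma signmats_ne: "signmats m n \<noteq> {}"
proof -
  have "toS m n (\<lambda>_ _. False) \<in> signmats m n" unfolding signmats_def toS_def by auto
  then show ?thesis by blast
qed

lemma signmats_card_pos: "card (signmats m n) > 0"
  using signmats_finite signmats_ne by (simp add: card_gt_0_iff)

lemma flip_sum_zero:
  fixes g h :: "(nat \<Rightarrow> nat \<Rightarrow> real) \<Rightarrow> real"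
  assumes "i < m" "j < n"
    "\<And>S. S \<in> signmats m n \<Longrightarrow> g (flipS i j S) = - g S"
    "\<And>S. S \<in> signmats m n \<Longrightarrow> h (flipS i j S) = h S"
  shows "(\<Sum>S\<in>signmats m n. g S * h S) = 0"
proof -
  have "(\<Sum>S\<in>signmats m n. g S * h S) = (\<Sum>S\<in>signmats m n. g (flipS i j S) * h (flipS i j S))"
    by (rule sum_invol) (use assms flipS_in flipS_flipS in auto)
  also have "\<dots> = (\<Sum>S\<in>signmats m n. - (g S * h S))"
    by (rule sum.cong) (simp_all add: assms)
  also have "\<dots> = - (\<Sum>S\<in>signmats m n. g S * h S)"
    by (simp add: sum_negf)
  finally show ?thesis by simp
qed

section \<open>Closure of generators\<close>

inductive_set cl :: "real set \<Rightarrow> ('z \<Rightarrow> real) set \<Rightarrow> ('z \<Rightarrow> real) set" for K Gen where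
  cl_const: "c \<in> K \<Longrightarrow> (\<lambda>_. c) \<in> cl K Gen"
| cl_gen: "g \<in> Gen \<Longrightarrow> g \<in> cl K Gen"
| cl_add: "f \<in> cl K Gen \<Longrightarrow> g \<in> cl K Gen \<Longrightarrow> (\<lambda>z. f z + g z) \<in> cl K Gen"
| cl_mult: "f \<in> cl K Gen \<Longrightarrow> g \<in> cl K Gen \<Longrightarrow> (\<lambda>z. f z * g z) \<in> cl K Gen"

lemma cl_sum: "finite I \<Longrightarrow> 0 \<in> K \<Longrightarrow> (\<And>i. i \<in> I \<Longrightarrow> f i \<in> cl K Gen) \<Longrightarrow> (\<lambda>z. \<Sum>i\<in>I. f i z) \<in> cl K Gen"
proof (induction I rule: finite_induct)
  case empty then show ?case using cl_const[of 0 K Gen] by simp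
next
  case (insert x F)
  then show ?case using cl_add[of "f x" K Gen "\<lambda>z. \<Sum>i\<in>F. f i z"] by simp
qed

lemma cl_pow: "1 \<in> K \<Longrightarrow> f \<in> cl K Gen \<Longrightarrow> (\<lambda>z. f z ^ k) \<in> cl K Gen"
proof (induction k)
  case 0 then show ?case using cl_const[of 1 K Gen] by simp
next
  case (Suc k) then show ?case using cl_mult[of f K Gen "\<lambda>z. f z ^ k"] by simp
qed

lemma cl_decomp:
  assumes "f \<in> cl K Gen" "Gen \<subseteq> insert gg Gen'" "h \<in> cl K Gen'" "\<forall>z\<in>D. gg z * gg z = h z"
    "0 \<in> K" "1 \<in> K"
  shows "\<exists>e od. e \<in> cl K Gen' \<and> od \<in> cl K Gen' \<and> (\<forall>z\<in>D. f z = e z + gg z * od z)"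
  using assms(1)
proof induction
  case (cl_const c)
  show ?case
    by (rule exI[of _ "\<lambda>_. c"], rule exI[of _ "\<lambda>_. 0"]) (use cl_const assms in \<open>auto intro: cl.cl_const\<close>)
next
  case (cl_gen g)
  show ?case
  proof (cases "g = gg")
    case True
    then show ?thesis
      by (intro exI[of _ "\<lambda>_. 0"] exI[of _ "\<lambda>_. 1"]) (use assms in \<open>auto intro: cl.cl_const\<close>)
  next
    case False
    then have "g \<in> Gen'" using cl_gen assms(2) by auto
    then show ?thesis
      by (intro exI[of _ g] exI[of _ "\<lambda>_. 0"]) (use assms in \<open>auto intro: cl.cl_const cl.cl_gen\<close>)
  qed
next
  case (cl_add f1 f2)
  then obtain e1 o1 e2 o2 where A: "e1 \<in> cl K Gen'" "o1 \<in> cl K Gen'" "e2 \<in> cl K Gen'" "o2 \<in> cl K Gen'"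
    "\<forall>z\<in>D. f1 z = e1 z + gg z * o1 z" "\<forall>z\<in>D. f2 z = e2 z + gg z * o2 z" by blast
  have "(\<lambda>z. e1 z + e2 z) \<in> cl K Gen'" "(\<lambda>z. o1 z + o2 z) \<in> cl K Gen'"
    using A cl.cl_add by blast+
  moreover have "\<forall>z\<in>D. f1 z + f2 z = (e1 z + e2 z) + gg z * (o1 z + o2 z)"
    using A by (simp add: algebra_simps)
  ultimately show ?case by blast
next
  case (cl_mult f1 f2)
  then obtain e1 o1 e2 o2 where A: "e1 \<in> cl K Gen'" "o1 \<in> cl K Gen'" "e2 \<in> cl K Gen'" "o2 \<in> cl K Gen'"
    "\<forall>z\<in>D. f1 z = e1 z + gg z * o1 z" "\<forall>z\<in>D. f2 z = e2 z + gg z * o2 z" by blast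
  have E: "(\<lambda>z. e1 z * e2 z + h z * (o1 z * o2 z)) \<in> cl K Gen'"
    by (rule cl.cl_add[OF cl.cl_mult[OF A(1) A(3)] cl.cl_mult[OF assms(3) cl.cl_mult[OF A(2) A(4)]]])
  have O: "(\<lambda>z. e1 z * o2 z + o1 z * e2 z) \<in> cl K Gen'"
    by (rule cl.cl_add[OF cl.cl_mult[OF A(1) A(4)] cl.cl_mult[OF A(2) A(3)]])
  have "\<forall>z\<in>D. f1 z * f2 z = (e1 z * e2 z + h z * (o1 z * o2 z)) + gg z * (e1 z * o2 z + o1 z * e2 z)"
  proof
    fix z assume z: "z \<in> D"
    have "f1 z * f2 z = (e1 z + gg z * o1 z) * (e2 z + gg z * o2 z)" using A z by simp
    also have "\<dots> = e1 z * e2 z + (gg z * gg z) * (o1 z * o2 z) + gg z * (e1 z * o2 z + o1 z * e2 z)"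
      by (simp add: algebra_simps)
    finally show "f1 z * f2 z = (e1 z * e2 z + h z * (o1 z * o2 z)) + gg z * (e1 z * o2 z + o1 z * e2 z)"
      using assms(4) z by simp
  qed
  then show ?case using E O by blast
qed

lemma cl_invar:
  assumes "f \<in> cl K Gen" "\<And>g z. g \<in> Gen \<Longrightarrow> z \<in> D \<Longrightarrow> g (\<phi> z) = g z" "z \<in> D"
  shows "f (\<phi> z) = f z"
  using assms(1) by induction (use assms in auto)

lemma cl_mono: "f \<in> cl K Gen \<Longrightarrow> Gen \<subseteq> Gen' \<Longrightarrow> f \<in> cl K Gen'"
proof (induction rule: cl.induct)
  case (cl_const c) then show ?case by (blast intro: cl.cl_const)
next
  case (cl_gen g) then show ?case by (auto intro: cl.cl_gen)
next
  case (cl_add f g) then show ?case by (blast intro: cl.cl_add)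
next
  case (cl_mult f g) then show ?case by (blast intro: cl.cl_mult)
qed

text \<open>Averaging step: removing one generator that is odd under a flip.\<close>

lemma avg_step:
  fixes f :: "(nat \<Rightarrow> nat \<Rightarrow> real) \<times> 'y \<Rightarrow> real"
  assumes "f \<in> cl K Gen" "Gen \<subseteq> insert gg Gen'" "h \<in> cl K Gen'"
    "\<And>S y. S \<in> signmats m n \<Longrightarrow> y \<in> Y \<Longrightarrow> gg (S, y) * gg (S, y) = h (S, y)"
    "0 \<in> K" "1 \<in> K" "i < m" "j < n"
    "\<And>S y. S \<in> signmats m n \<Longrightarrow> y \<in> Y \<Longrightarrow> gg (flipS i j S, y) = - gg (S, y)"
    "\<And>g S y. g \<in> Gen' \<Longrightarrow> S \<in> signmats m n \<Longrightarrow> y \<in> Y \<Longrightarrow> g (flipS i j S, y) = g (S, y)"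
  shows "\<exists>e \<in> cl K Gen'. \<forall>y\<in>Y. (\<Sum>S\<in>signmats m n. f (S, y)) = (\<Sum>S\<in>signmats m n. e (S, y))"
proof -
  let ?D = "{z. fst z \<in> signmats m n \<and> snd z \<in> Y}"
  have sq: "\<forall>z\<in>?D. gg z * gg z = h z"
  proof
    fix z assume "z \<in> ?D"
    then show "gg z * gg z = h z" using assms(4)[of "fst z" "snd z"] by simp
  qed
  obtain e od where E: "e \<in> cl K Gen'" "od \<in> cl K Gen'" "\<forall>z\<in>?D. f z = e z + gg z * od z"
    using cl_decomp[OF assms(1,2,3) sq assms(5,6)] by blast
  have "\<forall>y\<in>Y. (\<Sum>S\<in>signmats m n. f (S, y)) = (\<Sum>S\<in>signmats m n. e (S, y))"
  proof
    fix y assume y: "y \<in> Y"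
    have "(\<Sum>S\<in>signmats m n. f (S, y)) = (\<Sum>S\<in>signmats m n. e (S, y) + gg (S, y) * od (S, y))"
    proof (rule sum.cong[OF refl])
      fix S assume "S \<in> signmats m n"
      then have "(S, y) \<in> ?D" using y by simp
      then show "f (S, y) = e (S, y) + gg (S, y) * od (S, y)" using E(3) by blast
    qed
    then have "(\<Sum>S\<in>signmats m n. f (S, y)) = (\<Sum>S\<in>signmats m n. e (S, y)) + (\<Sum>S\<in>signmats m n. gg (S, y) * od (S, y))"
      by (simp only: sum.distrib)
    moreover have "(\<Sum>S\<in>signmats m n. gg (S, y) * od (S, y)) = 0"
    proof (rule flip_sum_zero[OF assms(7,8)])
      fix S assume S: "S \<in> signmats m n"
      show "gg (flipS i j S, y) = - gg (S, y)" using assms(9) S y by blast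
      have "od ((\<lambda>z. (flipS i j (fst z), snd z)) (S, y)) = od (S, y)"
      proof (rule cl_invar[OF E(2), where D="?D" and \<phi>="\<lambda>z. (flipS i j (fst z), snd z)" and z="(S, y)"])
        fix g z assume g: "g \<in> Gen'" and z: "z \<in> ?D"
        obtain S1 y1 where "z = (S1, y1)" by (cases z)
        then show "g ((\<lambda>z. (flipS i j (fst z), snd z)) z) = g z" using assms(10)[OF g] z by simp
      next
        show "(S, y) \<in> ?D" using S y by simp
      qed
      then show "od (flipS i j S, y) = od (S, y)" by simp
    qed
    ultimately show "(\<Sum>S\<in>signmats m n. f (S, y)) = (\<Sum>S\<in>signmats m n. e (S, y))" by simp
  qed
  then show ?thesis by (rule bexI[OF _ E(1)])
qed



section \<open>Moment as a finite sum\<close>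

definition Yr :: "nat \<Rightarrow> (nat \<Rightarrow> nat \<Rightarrow> real) \<Rightarrow> (nat \<Rightarrow> real) \<Rightarrow> nat \<Rightarrow> real" where
  "Yr n S x i = (\<Sum>j<n. S i j * x j)"

definition Qs :: "nat \<Rightarrow> nat \<Rightarrow> (nat \<Rightarrow> nat \<Rightarrow> real) \<Rightarrow> (nat \<Rightarrow> real) \<Rightarrow> real" where
  "Qs m n S x = (\<Sum>i<m. (Yr n S x i)\<^sup>2 - (\<Sum>j<n. (x j)\<^sup>2))"

definition Gf :: "nat \<Rightarrow> nat \<Rightarrow> nat \<Rightarrow> (nat \<Rightarrow> real) \<Rightarrow> real" where
  "Gf m n q x = (\<Sum>S\<in>signmats m n. (Qs m n S x) ^ q)"

lemma distortion_Qs: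
  assumes "m > 0" "(\<Sum>j<n. (x j)\<^sup>2) \<noteq> 0"
  shows "distortion m n S x = Qs m n S x / (real m * (\<Sum>j<n. (x j)\<^sup>2))"
proof -
  let ?N = "\<Sum>j<n. (x j)\<^sup>2"
  have r: "(\<Sum>j<n. Phi_of m S i j * x j)\<^sup>2 = (Yr n S x i)\<^sup>2 / real m" for i
  proof -
    have "(\<Sum>j<n. Phi_of m S i j * x j) = Yr n S x i / sqrt (real m)"
      by (simp add: Phi_of_def Yr_def sum_divide_distrib)
    then show ?thesis using assms(1) by (simp add: power_divide)
  qed
  have "distortion m n S x = (\<Sum>i<m. (Yr n S x i)\<^sup>2) / real m / ?N - 1"
    by (simp add: distortion_def r sum_divide_distrib)
  also have "\<dots> = ((\<Sum>i<m. (Yr n S x i)\<^sup>2) - real m * ?N) / (real m * ?N)"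
    using assms by (simp add: field_simps)
  also have "(\<Sum>i<m. (Yr n S x i)\<^sup>2) - real m * ?N = Qs m n S x"
    by (simp add: Qs_def sum_subtractf)
  finally show ?thesis .
qed

lemma moment_Gf:
  assumes "m > 0" "(\<Sum>j<n. (x j)\<^sup>2) \<noteq> 0"
  shows "moment m n q x = Gf m n q x / (real (card (signmats m n)) * (real m * (\<Sum>j<n. (x j)\<^sup>2)) ^ q)"
proof -
  let ?N = "\<Sum>j<n. (x j)\<^sup>2"
  have "moment m n q x = (\<Sum>S\<in>signmats m n. (distortion m n S x) ^ q) / real (card (signmats m n))"
    unfolding moment_def by (rule integral_pmf_of_set[OF signmats_ne signmats_finite])
  also have "(\<Sum>S\<in>signmats m n. (distortion m n S x) ^ q) = (\<Sum>S\<in>signmats m n. (Qs m n S x) ^ q / (real m * ?N) ^ q)"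
    using distortion_Qs[OF assms] by (simp add: power_divide)
  also have "\<dots> = Gf m n q x / (real m * ?N) ^ q"
    by (simp add: Gf_def sum_divide_distrib)
  finally show ?thesis by (simp add: field_simps)
qed

lemma poly_fun_gen:
  fixes e :: "'i \<Rightarrow> nat \<Rightarrow> nat"
  assumes "finite I" "\<forall>i\<in>I. \<forall>j\<ge>n. e i j = 0"
    "\<forall>a. P a = (\<Sum>i\<in>I. c i * (\<Prod>j<n. a j ^ e i j))"
  shows "poly_fun n P"
proof -
  define A where "A = e ` I"
  define c' where "c' \<alpha> = (\<Sum>i\<in>{i. i \<in> I \<and> e i = \<alpha>}. c i)" for \<alpha>
  have "\<forall>a. P a = (\<Sum>\<alpha>\<in>A. c' \<alpha> * (\<Prod>j<n. a j ^ \<alpha> j))"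
  proof
    fix a
    have "(\<Sum>\<alpha>\<in>A. c' \<alpha> * (\<Prod>j<n. a j ^ \<alpha> j)) =
          (\<Sum>\<alpha>\<in>A. (\<Sum>i\<in>{i. i \<in> I \<and> e i = \<alpha>}. c i * (\<Prod>j<n. a j ^ e i j)))"
      unfolding c'_def by (intro sum.cong refl) (auto simp: sum_distrib_right)
    also have "\<dots> = (\<Sum>i\<in>I. c i * (\<Prod>j<n. a j ^ e i j))"
      by (rule sum.group) (use assms(1) in \<open>auto simp: A_def\<close>)
    finally show "P a = (\<Sum>\<alpha>\<in>A. c' \<alpha> * (\<Prod>j<n. a j ^ \<alpha> j))" using assms(3) by simp
  qed
  moreover have "finite A" "\<forall>\<alpha>\<in>A. \<forall>j\<ge>n. \<alpha> j = 0" using assms(1,2) by (auto simp: A_def)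
  ultimately show ?thesis unfolding poly_fun_def by blast
qed

lemma poly_funE:
  assumes "poly_fun n P"
  obtains A c where "finite A" "\<forall>\<alpha>\<in>A. \<forall>j\<ge>n. \<alpha> j = (0::nat)"
    "\<forall>a. P a = (\<Sum>\<alpha>\<in>A. c \<alpha> * (\<Prod>j<n. a j ^ \<alpha> j))"
  using assms unfolding poly_fun_def by blast

lemma poly_const: "poly_fun n (\<lambda>_. c)"
  by (rule poly_fun_gen[where I = "{()}" and e = "\<lambda>_ _. 0" and c = "\<lambda>_. c"]) auto

lemma poly_var:
  assumes "j0 < n"
  shows "poly_fun n (\<lambda>a. a j0)"
proof -
  have H: "\<forall>a::nat\<Rightarrow>real. a j0 = (\<Sum>i\<in>{()}. 1 * (\<Prod>j<n. a j ^ (if j = j0 then 1 else 0)))"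
  proof
    fix a :: "nat \<Rightarrow> real"
    have "(\<Prod>j<n. a j ^ (if j = j0 then 1 else 0)) = (\<Prod>j<n. if j = j0 then a j else 1)"
      by (intro prod.cong) auto
    also have "\<dots> = a j0" using assms by simp
    finally show "a j0 = (\<Sum>i\<in>{()}. 1 * (\<Prod>j<n. a j ^ (if j = j0 then 1 else 0)))" by simp
  qed
  show ?thesis
    by (rule poly_fun_gen[where e = "\<lambda>_ j. if j = j0 then 1 else 0", OF _ _ H]) (use assms in auto)
qed

lemma poly_add:
  assumes "poly_fun n P" "poly_fun n Q"
  shows "poly_fun n (\<lambda>a. P a + Q a)"
proof -
  obtain A c where A: "finite A" "\<forall>\<alpha>\<in>A. \<forall>j\<ge>n. \<alpha> j = (0::nat)"
    "\<forall>a. P a = (\<Sum>\<alpha>\<in>A. c \<alpha> * (\<Prod>j<n. a j ^ \<alpha> j))" using assms(1) by (rule poly_funE)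
  obtain B d where B: "finite B" "\<forall>\<alpha>\<in>B. \<forall>j\<ge>n. \<alpha> j = (0::nat)"
    "\<forall>a. Q a = (\<Sum>\<alpha>\<in>B. d \<alpha> * (\<Prod>j<n. a j ^ \<alpha> j))" using assms(2) by (rule poly_funE)
  have H: "\<forall>a. P a + Q a = (\<Sum>i\<in>A <+> B. case_sum c d i * (\<Prod>j<n. a j ^ case_sum (\<lambda>\<alpha>. \<alpha>) (\<lambda>\<alpha>. \<alpha>) i j))"
      using A B by (simp add: sum.Plus o_def)
  show ?thesis
    by (rule poly_fun_gen[OF _ _ H]) (use A B in auto)
qed

lemma poly_mult:
  assumes "poly_fun n P" "poly_fun n Q"
  shows "poly_fun n (\<lambda>a. P a * Q a)"
proof -
  obtain A c where A: "finite A" "\<forall>\<alpha>\<in>A. \<forall>j\<ge>n. \<alpha> j = (0::nat)"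
    "\<forall>a. P a = (\<Sum>\<alpha>\<in>A. c \<alpha> * (\<Prod>j<n. a j ^ \<alpha> j))" using assms(1) by (rule poly_funE)
  obtain B d where B: "finite B" "\<forall>\<alpha>\<in>B. \<forall>j\<ge>n. \<alpha> j = (0::nat)"
    "\<forall>a. Q a = (\<Sum>\<alpha>\<in>B. d \<alpha> * (\<Prod>j<n. a j ^ \<alpha> j))" using assms(2) by (rule poly_funE)
  have H: "\<forall>a. P a * Q a = (\<Sum>i\<in>A \<times> B. (case i of (\<alpha>, \<beta>) \<Rightarrow> c \<alpha> * d \<beta>) *
              (\<Prod>j<n. a j ^ (case i of (\<alpha>, \<beta>) \<Rightarrow> \<lambda>j. \<alpha> j + \<beta> j) j))"
    proof
      fix a
      have "P a * Q a = (\<Sum>\<alpha>\<in>A. \<Sum>\<beta>\<in>B. (c \<alpha> * (\<Prod>j<n. a j ^ \<alpha> j)) * (d \<beta> * (\<Prod>j<n. a j ^ \<beta> j)))"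
        using A B by (simp add: sum_product)
      also have "\<dots> = (\<Sum>\<alpha>\<in>A. \<Sum>\<beta>\<in>B. (c \<alpha> * d \<beta>) * (\<Prod>j<n. a j ^ (\<alpha> j + \<beta> j)))"
        by (simp add: power_add prod.distrib mult_ac)
      also have "\<dots> = (\<Sum>i\<in>A \<times> B. (case i of (\<alpha>, \<beta>) \<Rightarrow> c \<alpha> * d \<beta>) *
              (\<Prod>j<n. a j ^ (case i of (\<alpha>, \<beta>) \<Rightarrow> \<lambda>j. \<alpha> j + \<beta> j) j))"
        by (simp add: sum.cartesian_product case_prod_beta)
      finally show "P a * Q a = (\<Sum>i\<in>A \<times> B. (case i of (\<alpha>, \<beta>) \<Rightarrow> c \<alpha> * d \<beta>) *
              (\<Prod>j<n. a j ^ (case i of (\<alpha>, \<beta>) \<Rightarrow> \<lambda>j. \<alpha> j + \<beta> j) j))" .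
    qed
  show ?thesis
    by (rule poly_fun_gen[OF _ _ H]) (use A B in auto)
qed

lemma poly_scale: "poly_fun n P \<Longrightarrow> poly_fun n (\<lambda>a. c * P a)"
  using poly_mult[OF poly_const] by blast

definition gP :: "nat \<times> nat \<Rightarrow> (nat \<Rightarrow> nat \<Rightarrow> real) \<times> (nat \<Rightarrow> real) \<Rightarrow> real" where
  "gP c z = fst z (fst c) (snd c) * snd z (snd c)"

definition sqP :: "nat \<Rightarrow> (nat \<Rightarrow> nat \<Rightarrow> real) \<times> (nat \<Rightarrow> real) \<Rightarrow> real" where
  "sqP j z = (snd z j)\<^sup>2"

definition GP where "GP V A = gP ` V \<union> sqP ` A"

lemma poly_base:
  assumes "f \<in> cl UNIV (sqP ` A)" "A \<subseteq> {..<n}"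
  shows "\<exists>P. poly_fun n P \<and> (\<forall>z. f z = P (\<lambda>j. (snd z j)\<^sup>2))"
  using assms(1)
proof induction
  case (cl_const c)
  then show ?case using poly_const by blast
next
  case (cl_gen g)
  then obtain j where j: "j \<in> A" "g = sqP j" by blast
  then have "poly_fun n (\<lambda>a. a j)" using assms(2) poly_var by blast
  then show ?case using j by (auto simp: sqP_def)
next
  case (cl_add f g)
  then obtain P Q where "poly_fun n P" "\<forall>z. f z = P (\<lambda>j. (snd z j)\<^sup>2)" "poly_fun n Q" "\<forall>z. g z = Q (\<lambda>j. (snd z j)\<^sup>2)"
    by blast
  then show ?case using poly_add by fastforce
next
  case (cl_mult f g)
  then obtain P Q where "poly_fun n P" "\<forall>z. f z = P (\<lambda>j. (snd z j)\<^sup>2)" "poly_fun n Q" "\<forall>z. g z = Q (\<lambda>j. (snd z j)\<^sup>2)"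
    by blast
  then show ?case using poly_mult by fastforce
qed

lemma poly_E:
  assumes "finite V" "V \<subseteq> {..<m} \<times> {..<n}" "A \<subseteq> {..<n}" "f \<in> cl UNIV (GP V A)"
  shows "\<exists>P. poly_fun n P \<and> (\<forall>x. (\<Sum>S\<in>signmats m n. f (S, x)) = P (\<lambda>j. (x j)\<^sup>2))"
  using assms
proof (induction V arbitrary: f A rule: finite_induct)
  case empty
  then have "f \<in> cl UNIV (sqP ` A)" by (simp add: GP_def)
  then obtain P where P: "poly_fun n P" "\<forall>z. f z = P (\<lambda>j. (snd z j)\<^sup>2)"
    using poly_base empty.prems(2) by blast
  have "\<forall>x. (\<Sum>S\<in>signmats m n. f (S, x)) = real (card (signmats m n)) * P (\<lambda>j. (x j)\<^sup>2)"
    using P(2) by simp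
  then show ?case using poly_scale[OF P(1)] by blast
next
  case (insert c V)
  obtain i j where c: "c = (i, j)" by (cases c)
  have ij: "i < m" "j < n" using insert.prems(1) c by auto
  have "\<exists>e \<in> cl UNIV (GP V (insert j A)). \<forall>y\<in>UNIV. (\<Sum>S\<in>signmats m n. f (S, y)) = (\<Sum>S\<in>signmats m n. e (S, y))"
  proof (rule avg_step[where gg = "gP c" and h = "sqP j" and i = i and j = j])
    show "f \<in> cl UNIV (GP (insert c V) A)" by fact
    show "GP (insert c V) A \<subseteq> insert (gP c) (GP V (insert j A))" by (auto simp: GP_def)
    show "sqP j \<in> cl UNIV (GP V (insert j A))" by (rule cl_gen) (simp add: GP_def)
    show "gP c (S, y) * gP c (S, y) = sqP j (S, y)" if "S \<in> signmats m n" for S y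
    proof -
      have "S i j * S i j = 1" using signmats_sq[OF that ij] .
      then show ?thesis by (simp add: gP_def sqP_def c power2_eq_square algebra_simps)
    qed
    show "gP c (flipS i j S, y) = - gP c (S, y)" for S y by (simp add: gP_def flipS_def c)
    show "g (flipS i j S, y) = g (S, y)" if "g \<in> GP V (insert j A)" for g S y
    proof -
      { fix c' assume "c' \<in> V" "g = gP c'"
        then have "c' \<noteq> (i, j)" using insert.hyps(2) c by auto
        then have ?thesis using \<open>g = gP c'\<close> by (cases c') (auto simp: gP_def flipS_def) }
      moreover
      { fix j' assume "g = sqP j'"
        then have ?thesis by (simp add: sqP_def) }
      ultimately show ?thesis using that by (auto simp: GP_def)
    qed
  qed (use ij in auto)
  then obtain e where e: "e \<in> cl UNIV (GP V (insert j A))"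
    "\<forall>y. (\<Sum>S\<in>signmats m n. f (S, y)) = (\<Sum>S\<in>signmats m n. e (S, y))" by blast
  have "\<exists>P. poly_fun n P \<and> (\<forall>x. (\<Sum>S\<in>signmats m n. e (S, x)) = P (\<lambda>j. (x j)\<^sup>2))"
    by (rule insert.IH) (use insert.prems ij e(1) in auto)
  then show ?case using e(2) by simp
qed

lemma Gf_poly:
  shows "\<exists>P. poly_fun n P \<and> (\<forall>x. Gf m n q x = P (\<lambda>j. (x j)\<^sup>2))"
proof -
  let ?V = "{..<m} \<times> {..<n}" and ?A = "{..<n}"
  have mem: "(\<lambda>z. (\<Sum>i<m. (\<Sum>j<n. gP (i, j) z)\<^sup>2 + (\<lambda>_. -1) z * (\<Sum>j<n. sqP j z)) ^ q) \<in> cl UNIV (GP ?V ?A)"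
  proof (rule cl_pow, simp, rule cl_sum, simp, simp)
    fix i assume i: "i \<in> {..<m}"
    have s1: "(\<lambda>z. \<Sum>j<n. gP (i, j) z) \<in> cl UNIV (GP ?V ?A)"
      by (rule cl_sum) (use i in \<open>auto intro!: cl_gen simp: GP_def\<close>)
    have s2: "(\<lambda>z. \<Sum>j<n. sqP j z) \<in> cl UNIV (GP ?V ?A)"
      by (rule cl_sum) (auto intro!: cl_gen simp: GP_def)
    show "(\<lambda>z. (\<Sum>j<n. gP (i, j) z)\<^sup>2 + (\<lambda>_. -1) z * (\<Sum>j<n. sqP j z)) \<in> cl UNIV (GP ?V ?A)"
      by (rule cl_add[OF cl_pow[OF _ s1] cl_mult[OF cl_const s2]]) auto
  qed
  obtain P where P: "poly_fun n P"
    "\<forall>x. (\<Sum>S\<in>signmats m n. (\<lambda>z. (\<Sum>i<m. (\<Sum>j<n. gP (i, j) z)\<^sup>2 + (\<lambda>_. -1) z * (\<Sum>j<n. sqP j z)) ^ q) (S, x)) = P (\<lambda>j. (x j)\<^sup>2)"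
    using poly_E[OF _ _ _ mem, of m n] by auto
  have "Gf m n q x = (\<Sum>S\<in>signmats m n. (\<lambda>z. (\<Sum>i<m. (\<Sum>j<n. gP (i, j) z)\<^sup>2 + (\<lambda>_. -1) z * (\<Sum>j<n. sqP j z)) ^ q) (S, x))" for x
    by (simp add: Gf_def Qs_def Yr_def gP_def sqP_def)
  then show ?thesis using P by auto
qed



section \<open>Nonnegative closure and monotonicity in the pair product\<close>

type_synonym zz = "(nat \<Rightarrow> nat \<Rightarrow> real) \<times> (real \<times> real)"

definition parG :: "zz \<Rightarrow> real" where "parG z = fst (snd z) * snd (snd z)"
definition crdG :: "nat \<times> nat \<Rightarrow> zz \<Rightarrow> real" where "crdG c z = fst z (fst c) (snd c)"
definition WG :: "nat \<Rightarrow> nat \<Rightarrow> nat \<Rightarrow> zz \<Rightarrow> real" where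
  "WG u v i z = fst z i u * (fst (snd z) + fst z i v * snd (snd z))"
definition Gs where "Gs u v V U = insert parG (crdG ` V \<union> WG u v ` U)"
definition Ys :: "real \<Rightarrow> (real \<times> real) set" where
  "Ys s = {y. 0 \<le> fst y \<and> 0 \<le> snd y \<and> (fst y)\<^sup>2 + (snd y)\<^sup>2 = s}"
definition NNK :: "real set" where "NNK = {c. 0 \<le> c}"

lemma NNK01: "0 \<in> NNK" "1 \<in> NNK" by (auto simp: NNK_def)

lemma NN_base:
  assumes "f \<in> cl NNK {parG}" "0 \<le> parG z" "parG z \<le> parG z'"
  shows "0 \<le> f z \<and> f z \<le> f z'"
  using assms(1)
proof induction
  case (cl_const c) then show ?case by (simp add: NNK_def)
next
  case (cl_gen g) then show ?case using assms by simp
next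
  case (cl_add f g) then show ?case by simp
next
  case (cl_mult f g) then show ?case by (simp add: mult_mono)
qed

definition NNconc :: "nat \<Rightarrow> nat \<Rightarrow> real \<Rightarrow> (zz \<Rightarrow> real) \<Rightarrow> bool" where
  "NNconc m n s f \<longleftrightarrow> (\<forall>y\<in>Ys s. \<forall>y'\<in>Ys s. fst y * snd y \<le> fst y' * snd y' \<longrightarrow>
      0 \<le> (\<Sum>S\<in>signmats m n. f (S, y)) \<and> (\<Sum>S\<in>signmats m n. f (S, y)) \<le> (\<Sum>S\<in>signmats m n. f (S, y')))"

lemma NNconc_cong:
  assumes "NNconc m n s e" "\<forall>y\<in>Ys s. (\<Sum>S\<in>signmats m n. f (S, y)) = (\<Sum>S\<in>signmats m n. e (S, y))"
  shows "NNconc m n s f"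
  using assms unfolding NNconc_def by simp

lemma NN_E0:
  assumes "finite V" "V \<subseteq> {..<m} \<times> {..<n}" "f \<in> cl NNK (Gs u v V {})"
  shows "NNconc m n s f"
  using assms
proof (induction V arbitrary: f rule: finite_induct)
  case empty
  then have f: "f \<in> cl NNK {parG}" by (simp add: Gs_def)
  show ?case unfolding NNconc_def
  proof (intro ballI impI)
    fix y y' assume y: "y \<in> Ys s" "y' \<in> Ys s" "fst y * snd y \<le> fst y' * snd y'"
    have "0 \<le> f (S, y) \<and> f (S, y) \<le> f (S, y')" for S
      by (rule NN_base[OF f]) (use y in \<open>auto simp: parG_def Ys_def\<close>)
    then show "0 \<le> (\<Sum>S\<in>signmats m n. f (S, y)) \<and> (\<Sum>S\<in>signmats m n. f (S, y)) \<le> (\<Sum>S\<in>signmats m n. f (S, y'))"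
      by (simp add: sum_nonneg sum_mono)
  qed
next
  case (insert c V)
  obtain i j where c: "c = (i, j)" by (cases c)
  have ij: "i < m" "j < n" using insert.prems(1) c by auto
  have "\<exists>e \<in> cl NNK (Gs u v V {}). \<forall>y\<in>Ys s. (\<Sum>S\<in>signmats m n. f (S, y)) = (\<Sum>S\<in>signmats m n. e (S, y))"
  proof (rule avg_step[where gg = "crdG c" and h = "\<lambda>_. 1" and i = i and j = j])
    show "f \<in> cl NNK (Gs u v (insert c V) {})" by fact
    show "Gs u v (insert c V) {} \<subseteq> insert (crdG c) (Gs u v V {})" by (auto simp: Gs_def)
    show "(\<lambda>_. 1) \<in> cl NNK (Gs u v V {})" by (rule cl_const) (simp add: NNK_def)
    show "crdG c (S, y) * crdG c (S, y) = 1" if "S \<in> signmats m n" for S y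
      using signmats_sq[OF that ij] by (simp add: crdG_def c)
    show "crdG c (flipS i j S, y) = - crdG c (S, y)" for S y by (simp add: crdG_def flipS_def c)
    show "g (flipS i j S, y) = g (S, y)" if "g \<in> Gs u v V {}" for g S y
    proof -
      { fix c' assume "c' \<in> V" "g = crdG c'"
        then have "c' \<noteq> (i, j)" using insert.hyps(2) c by auto
        then have ?thesis using \<open>g = crdG c'\<close> by (cases c') (auto simp: crdG_def flipS_def) }
      moreover
      { assume "g = parG"
        then have ?thesis by (simp add: parG_def) }
      ultimately show ?thesis using that by (auto simp: Gs_def)
    qed
  qed (use ij NNK01 in auto)
  then obtain e where e: "e \<in> cl NNK (Gs u v V {})"
    "\<forall>y\<in>Ys s. (\<Sum>S\<in>signmats m n. f (S, y)) = (\<Sum>S\<in>signmats m n. e (S, y))" by blast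
  have "NNconc m n s e" by (rule insert.IH) (use insert.prems e(1) in auto)
  then show ?case using e(2) by (rule NNconc_cong)
qed

lemma NN_E:
  assumes "finite U" "U \<subseteq> {..<m}" "finite V" "V \<subseteq> {..<m} \<times> {..<n}" "\<forall>c\<in>V. snd c \<noteq> u"
    "\<forall>i\<in>U. (i, v) \<in> V" "u < n" "v < n" "u \<noteq> v" "0 \<le> s" "f \<in> cl NNK (Gs u v V U)"
  shows "NNconc m n s f"
  using assms
proof (induction U arbitrary: f rule: finite_induct)
  case empty
  then show ?case using NN_E0 by blast
next
  case (insert i U)
  have i: "i < m" using insert.prems(1) by auto
  have iv: "(i, v) \<in> V" using insert.prems(5) by auto
  have "\<exists>e \<in> cl NNK (Gs u v V U). \<forall>y\<in>Ys s. (\<Sum>S\<in>signmats m n. f (S, y)) = (\<Sum>S\<in>signmats m n. e (S, y))"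
  proof (rule avg_step[where gg = "WG u v i" and h = "\<lambda>z. s + 2 * (crdG (i, v) z * parG z)" and i = i and j = u])
    show "f \<in> cl NNK (Gs u v V (insert i U))" by fact
    show "Gs u v V (insert i U) \<subseteq> insert (WG u v i) (Gs u v V U)" by (auto simp: Gs_def)
    have g1: "crdG (i, v) \<in> cl NNK (Gs u v V U)" by (rule cl_gen) (use iv in \<open>simp add: Gs_def\<close>)
    have g2: "parG \<in> cl NNK (Gs u v V U)" by (rule cl_gen) (simp add: Gs_def)
    show "(\<lambda>z. s + 2 * (crdG (i, v) z * parG z)) \<in> cl NNK (Gs u v V U)"
      by (rule cl_add[OF cl_const cl_mult[OF cl_const cl_mult[OF g1 g2]]]) (use insert.prems(9) in \<open>auto simp: NNK_def\<close>)
    show "WG u v i (S, y) * WG u v i (S, y) = s + 2 * (crdG (i, v) (S, y) * parG (S, y))"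
      if "S \<in> signmats m n" "y \<in> Ys s" for S y
    proof -
      have a: "S i u * S i u = 1" using signmats_sq[OF that(1) i insert.prems(6)] .
      have b: "S i v * S i v = 1" using signmats_sq[OF that(1) i insert.prems(7)] .
      have c: "(fst y)\<^sup>2 + (snd y)\<^sup>2 = s" using that(2) by (simp add: Ys_def)
      have "WG u v i (S, y) * WG u v i (S, y) = (S i u * S i u) * ((fst y)\<^sup>2 + (S i v * S i v) * (snd y)\<^sup>2 + 2 * (S i v * (fst y * snd y)))"
        by (simp add: WG_def power2_eq_square algebra_simps)
      also have "\<dots> = s + 2 * (S i v * (fst y * snd y))" using a b c by simp
      finally show ?thesis by (simp add: crdG_def parG_def)
    qed
    show "WG u v i (flipS i u S, y) = - WG u v i (S, y)" for S y
      using insert.prems(8) by (simp add: WG_def flipS_def)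
    show "g (flipS i u S, y) = g (S, y)" if "g \<in> Gs u v V U" for g S y
    proof -
      { fix c' assume "c' \<in> V" "g = crdG c'"
        then have "c' \<noteq> (i, u)" using insert.prems(4) by auto
        then have ?thesis using \<open>g = crdG c'\<close> by (cases c') (auto simp: crdG_def flipS_def) }
      moreover
      { fix k assume "k \<in> U" "g = WG u v k"
        then have "k \<noteq> i" using insert.hyps(2) by auto
        then have ?thesis using \<open>g = WG u v k\<close> by (simp add: WG_def flipS_def) }
      moreover
      { assume "g = parG"
        then have ?thesis by (simp add: parG_def) }
      ultimately show ?thesis using that by (auto simp: Gs_def)
    qed
  qed (use i insert.prems(6) NNK01 in auto)
  then obtain e where e: "e \<in> cl NNK (Gs u v V U)"
    "\<forall>y\<in>Ys s. (\<Sum>S\<in>signmats m n. f (S, y)) = (\<Sum>S\<in>signmats m n. e (S, y))" by blast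
  have "NNconc m n s e" by (rule insert.IH) (use insert.prems e(1) in auto)
  then show ?case using e(2) by (rule NNconc_cong)
qed



definition phiS :: "nat \<Rightarrow> nat \<Rightarrow> nat \<Rightarrow> (nat \<Rightarrow> nat \<Rightarrow> real) \<Rightarrow> nat \<Rightarrow> nat \<Rightarrow> real" where
  "phiS m u v S = (\<lambda>i j. if i < m \<and> j = v then S i u * S i v else S i j)"

lemma phiS_in:
  assumes "S \<in> signmats m n" "u < n" "v < n"
  shows "phiS m u v S \<in> signmats m n"
proof (rule signmats_I)
  fix i j assume ij: "i < m" "j < n"
  show "phiS m u v S i j = 1 \<or> phiS m u v S i j = -1"
    using signmats_D[OF assms(1) ij] signmats_D[OF assms(1) ij(1) assms(2)] signmats_D[OF assms(1) ij(1) assms(3)]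
    by (auto simp: phiS_def)
next
  fix i j assume "\<not> (i < m \<and> j < n)"
  then show "phiS m u v S i j = 0" using signmats_D0[OF assms(1)] assms by (auto simp: phiS_def)
qed

lemma phiS_phiS:
  assumes "S \<in> signmats m n" "u < n" "v < n" "u \<noteq> v"
  shows "phiS m u v (phiS m u v S) = S"
proof (intro ext)
  fix i j
  show "phiS m u v (phiS m u v S) i j = S i j"
  proof (cases "i < m \<and> j = v")
    case True
    then have "S i u * S i u = 1" using signmats_sq[OF assms(1) _ assms(2)] by auto
    then show ?thesis using True assms(4) by (simp add: phiS_def mult.assoc[symmetric])
  next
    case False
    have "phiS m u v (phiS m u v S) i j = phiS m u v S i j" using False unfolding phiS_def by (simp only: if_False)
    also have "\<dots> = S i j" using False unfolding phiS_def by (simp only: if_False)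
    finally show ?thesis .
  qed
qed

lemma sum_split2:
  fixes n u v :: nat
  assumes "u < n" "v < n" "u \<noteq> v"
  shows "(\<Sum>j<n. f j) = f u + f v + (\<Sum>j\<in>{..<n} - {u, v}. f j)"
proof -
  have "{..<n} = insert u (insert v ({..<n} - {u, v}))" using assms by auto
  then have "(\<Sum>j<n. f j) = (\<Sum>j\<in>insert u (insert v ({..<n} - {u, v})). f j)" by simp
  also have "\<dots> = f u + (f v + (\<Sum>j\<in>{..<n} - {u, v}. f j))"
  proof -
    have fin: "finite ({..<n} - {u, v})" by simp
    have fin2: "finite (insert v ({..<n} - {u, v}))" by simp
    have nv: "v \<notin> {..<n} - {u, v}" by blast
    have nu: "u \<notin> insert v ({..<n} - {u, v})" using assms(3) by blast
    show ?thesis unfolding sum.insert[OF fin2 nu] sum.insert[OF fin nv] ..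
  qed
  also have "\<dots> = f u + f v + (\<Sum>j\<in>{..<n} - {u, v}. f j)" by (simp add: add.assoc)
  finally show ?thesis .
qed

definition Rg :: "nat \<Rightarrow> nat \<Rightarrow> nat \<Rightarrow> (nat \<Rightarrow> real) \<Rightarrow> nat \<Rightarrow> zz \<Rightarrow> real" where
  "Rg n u v x i z = (\<Sum>j\<in>{..<n} - {u, v}. crdG (i, j) z * x j)"

definition Fb :: "nat \<Rightarrow> nat \<Rightarrow> nat \<Rightarrow> nat \<Rightarrow> (nat \<Rightarrow> real) \<Rightarrow> zz \<Rightarrow> real" where
  "Fb m n u v x z = (\<Sum>i<m. 2 * (crdG (i, v) z * parG z) + 2 * (WG u v i z * Rg n u v x i z) +
      (\<Sum>j\<in>{..<n} - {u, v}. \<Sum>k\<in>{..<n} - {u, v} - {j}. crdG (i, j) z * crdG (i, k) z * (x j * x k)))"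

lemma Qs_phiS:
  assumes "S \<in> signmats m n" "u < n" "v < n" "u \<noteq> v"
  shows "Qs m n (phiS m u v S) (x(u := y1, v := y2)) = Fb m n u v x (S, (y1, y2))"
proof -
  let ?J = "{..<n} - {u, v}"
  let ?x = "x(u := y1, v := y2)"
  let ?z = "(S, (y1, y2))"
  have N: "(\<Sum>j<n. (?x j)\<^sup>2) = y1\<^sup>2 + y2\<^sup>2 + (\<Sum>j\<in>?J. (x j)\<^sup>2)"
    using sum_split2[OF assms(2-4), of "\<lambda>j. (?x j)\<^sup>2"] assms(4) by simp
  have row: "(Yr n (phiS m u v S) ?x i)\<^sup>2 - (\<Sum>j<n. (?x j)\<^sup>2) =
      2 * (crdG (i, v) ?z * parG ?z) + 2 * (WG u v i ?z * Rg n u v x i ?z) +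
      (\<Sum>j\<in>?J. \<Sum>k\<in>?J - {j}. crdG (i, j) ?z * crdG (i, k) ?z * (x j * x k))" if i: "i < m" for i
  proof -
    have su: "S i u * S i u = 1" using signmats_sq[OF assms(1) i assms(2)] .
    have sv: "S i v * S i v = 1" using signmats_sq[OF assms(1) i assms(3)] .
    define R where "R = Rg n u v x i ?z"
    define W where "W = WG u v i ?z"
    have Y: "Yr n (phiS m u v S) ?x i = W + R"
    proof -
      have "Yr n (phiS m u v S) ?x i = phiS m u v S i u * y1 + phiS m u v S i v * y2 +
             (\<Sum>j\<in>?J. phiS m u v S i j * ?x j)"
        unfolding Yr_def using sum_split2[OF assms(2-4), of "\<lambda>j. phiS m u v S i j * ?x j"] assms(4) by simp
      also have "(\<Sum>j\<in>?J. phiS m u v S i j * ?x j) = R"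
        unfolding R_def Rg_def by (intro sum.cong) (auto simp: phiS_def crdG_def)
      also have "phiS m u v S i u * y1 + phiS m u v S i v * y2 = W"
        using i assms(4) by (simp add: phiS_def W_def WG_def algebra_simps)
      finally show ?thesis .
    qed
    have W2: "W\<^sup>2 = y1\<^sup>2 + y2\<^sup>2 + 2 * (S i v * (y1 * y2))"
    proof -
      have "W\<^sup>2 = (S i u * S i u) * (y1\<^sup>2 + (S i v * S i v) * y2\<^sup>2 + 2 * (S i v * (y1 * y2)))"
        by (simp add: W_def WG_def power2_eq_square algebra_simps)
      then show ?thesis using su sv by simp
    qed
    have R2: "R\<^sup>2 = (\<Sum>j\<in>?J. (x j)\<^sup>2) + (\<Sum>j\<in>?J. \<Sum>k\<in>?J - {j}. crdG (i, j) ?z * crdG (i, k) ?z * (x j * x k))"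
    proof -
      have "R\<^sup>2 = (\<Sum>j\<in>?J. \<Sum>k\<in>?J. (S i j * x j) * (S i k * x k))"
        by (simp add: R_def Rg_def crdG_def power2_eq_square sum_product)
      also have "\<dots> = (\<Sum>j\<in>?J. (x j)\<^sup>2 + (\<Sum>k\<in>?J - {j}. crdG (i, j) ?z * crdG (i, k) ?z * (x j * x k)))"
      proof (intro sum.cong refl)
        fix j assume j: "j \<in> ?J"
        have sj: "S i j * S i j = 1" using signmats_sq[OF assms(1) i] j by auto
        have "(\<Sum>k\<in>?J. (S i j * x j) * (S i k * x k)) = (S i j * x j) * (S i j * x j) + (\<Sum>k\<in>?J - {j}. (S i j * x j) * (S i k * x k))"
          using j by (subst sum.remove[of _ j]) auto
        also have "(S i j * x j) * (S i j * x j) = (x j)\<^sup>2"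
          using sj by (simp add: power2_eq_square algebra_simps)
        finally show "(\<Sum>k\<in>?J. (S i j * x j) * (S i k * x k)) = (x j)\<^sup>2 + (\<Sum>k\<in>?J - {j}. crdG (i, j) ?z * crdG (i, k) ?z * (x j * x k))"
          by (simp add: crdG_def algebra_simps)
      qed
      also have "\<dots> = (\<Sum>j\<in>?J. (x j)\<^sup>2) + (\<Sum>j\<in>?J. \<Sum>k\<in>?J - {j}. crdG (i, j) ?z * crdG (i, k) ?z * (x j * x k))"
        by (simp add: sum.distrib)
      finally show ?thesis .
    qed
    have "(Yr n (phiS m u v S) ?x i)\<^sup>2 - (\<Sum>j<n. (?x j)\<^sup>2) = W\<^sup>2 + 2 * (W * R) + R\<^sup>2 - (y1\<^sup>2 + y2\<^sup>2 + (\<Sum>j\<in>?J. (x j)\<^sup>2))"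
      unfolding Y N by (simp add: power2_eq_square algebra_simps)
    also have "\<dots> = 2 * (S i v * (y1 * y2)) + 2 * (W * R) + (\<Sum>j\<in>?J. \<Sum>k\<in>?J - {j}. crdG (i, j) ?z * crdG (i, k) ?z * (x j * x k))"
      unfolding W2 R2 by simp
    finally show ?thesis by (simp add: W_def R_def crdG_def parG_def)
  qed
  show ?thesis unfolding Qs_def Fb_def by (intro sum.cong refl) (use row in auto)
qed

lemma Fb_cl:
  assumes "\<forall>j. 0 \<le> x j" "u < n" "v < n" "u \<noteq> v"
  shows "(\<lambda>z. (Fb m n u v x z) ^ q) \<in> cl NNK (Gs u v {(i, j). i < m \<and> j < n \<and> j \<noteq> u} {..<m})"
proof -
  let ?G = "Gs u v {(i, j). i < m \<and> j < n \<and> j \<noteq> u} {..<m}"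
  let ?J = "{..<n} - {u, v}"
  have crd: "crdG (i, j) \<in> cl NNK ?G" if "i < m" "j < n" "j \<noteq> u" for i j
    by (rule cl_gen) (use that in \<open>auto simp: Gs_def\<close>)
  have par: "parG \<in> cl NNK ?G" by (rule cl_gen) (simp add: Gs_def)
  have W: "WG u v i \<in> cl NNK ?G" if "i < m" for i
    by (rule cl_gen) (use that in \<open>auto simp: Gs_def\<close>)
  have two: "(\<lambda>_. 2) \<in> cl NNK ?G" by (rule cl_const) (simp add: NNK_def)
  have R: "Rg n u v x i \<in> cl NNK ?G" if "i < m" for i
  proof -
    have "(\<lambda>z. \<Sum>j\<in>?J. crdG (i, j) z * (\<lambda>_. x j) z) \<in> cl NNK ?G"
    proof (rule cl_sum[OF _ NNK01(1)])
      fix j assume j: "j \<in> ?J"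
      have c: "(\<lambda>_. x j) \<in> cl NNK ?G" by (rule cl_const) (simp add: NNK_def assms(1))
      show "(\<lambda>z. crdG (i, j) z * (\<lambda>_. x j) z) \<in> cl NNK ?G"
        by (rule cl_mult[OF crd c]) (use j that in auto)
    qed simp
    then show ?thesis by (simp add: Rg_def[abs_def])
  qed
  have T: "(\<lambda>z. \<Sum>j\<in>?J. \<Sum>k\<in>?J - {j}. crdG (i, j) z * crdG (i, k) z * (\<lambda>_. x j * x k) z) \<in> cl NNK ?G" if "i < m" for i
  proof (rule cl_sum[OF _ NNK01(1)])
    fix j assume j: "j \<in> ?J"
    show "(\<lambda>z. \<Sum>k\<in>?J - {j}. crdG (i, j) z * crdG (i, k) z * (\<lambda>_. x j * x k) z) \<in> cl NNK ?G"
    proof (rule cl_sum[OF _ NNK01(1)])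
      fix k assume k: "k \<in> ?J - {j}"
      have c: "(\<lambda>_. x j * x k) \<in> cl NNK ?G" by (rule cl_const) (simp add: NNK_def assms(1))
      have cj: "crdG (i, j) \<in> cl NNK ?G" by (rule crd) (use j that in auto)
      have ck: "crdG (i, k) \<in> cl NNK ?G" by (rule crd) (use k that in auto)
      show "(\<lambda>z. crdG (i, j) z * crdG (i, k) z * (\<lambda>_. x j * x k) z) \<in> cl NNK ?G"
        by (rule cl_mult[OF cl_mult[OF cj ck] c])
    qed simp
  qed simp
  have "(\<lambda>z. Fb m n u v x z) \<in> cl NNK ?G"
  proof -
    have "(\<lambda>z. \<Sum>i<m. (\<lambda>_. 2) z * (crdG (i, v) z * parG z) + (\<lambda>_. 2) z * (WG u v i z * Rg n u v x i z) +
      (\<Sum>j\<in>?J. \<Sum>k\<in>?J - {j}. crdG (i, j) z * crdG (i, k) z * (\<lambda>_. x j * x k) z)) \<in> cl NNK ?G"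
    proof (rule cl_sum, simp, simp add: NNK01)
      fix i assume i: "i \<in> {..<m}"
      then have i': "i < m" by simp
      show "(\<lambda>z. (\<lambda>_. 2) z * (crdG (i, v) z * parG z) + (\<lambda>_. 2) z * (WG u v i z * Rg n u v x i z) +
            (\<Sum>j\<in>?J. \<Sum>k\<in>?J - {j}. crdG (i, j) z * crdG (i, k) z * (\<lambda>_. x j * x k) z)) \<in> cl NNK ?G"
        by (rule cl_add[OF cl_add[OF cl_mult[OF two cl_mult[OF crd[OF i' assms(3) not_sym[OF assms(4)]] par]]
              cl_mult[OF two cl_mult[OF W[OF i'] R[OF i']]]] T[OF i']])
    qed
    then show ?thesis by (simp add: Fb_def)
  qed
  then show ?thesis by (rule cl_pow[OF NNK01(2)])
qed

lemma Gf_pair_mono: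
  assumes "\<forall>j. 0 \<le> x j" "u < n" "v < n" "u \<noteq> v" "0 \<le> s"
    "y \<in> Ys s" "y' \<in> Ys s" "fst y * snd y \<le> fst y' * snd y'"
  shows "Gf m n q (x(u := fst y, v := snd y)) \<le> Gf m n q (x(u := fst y', v := snd y'))"
proof -
  have NN: "NNconc m n s (\<lambda>z. (Fb m n u v x z) ^ q)"
    by (rule NN_E[OF _ _ _ _ _ _ assms(2,3,4,5) Fb_cl[OF assms(1-4)]]) (use assms(3,4) in auto)
  have eq: "Gf m n q (x(u := fst w, v := snd w)) = (\<Sum>S\<in>signmats m n. (Fb m n u v x (S, w)) ^ q)" for w
  proof -
    have "Gf m n q (x(u := fst w, v := snd w)) = (\<Sum>S\<in>signmats m n. (Qs m n (phiS m u v S) (x(u := fst w, v := snd w))) ^ q)"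
      unfolding Gf_def by (rule sum_invol) (use phiS_in phiS_phiS assms(2-4) in auto)
    also have "\<dots> = (\<Sum>S\<in>signmats m n. (Fb m n u v x (S, w)) ^ q)"
      by (intro sum.cong refl) (use Qs_phiS[OF _ assms(2-4)] in \<open>cases w, auto\<close>)
    finally show ?thesis .
  qed
  show ?thesis unfolding eq using NN assms(6-8) unfolding NNconc_def by blast
qed



lemma moment_cong:
  assumes "\<forall>j<n. x j = x' j"
  shows "moment m n q x = moment m n q x'"
proof -
  have "distortion m n S x = distortion m n S x'" for S
    unfolding distortion_def using assms by (intro arg_cong2[where f = "\<lambda>a b. a / b - 1"] sum.cong refl) auto
  then show ?thesis unfolding moment_def by simp
qed

abbreviation Fm :: "nat \<Rightarrow> nat \<Rightarrow> nat \<Rightarrow> (nat \<Rightarrow> real) \<Rightarrow> real" where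
  "Fm m n q c \<equiv> moment m n q (\<lambda>j. sqrt (c j))"

lemma T_mono:
  assumes "m > 0" "\<forall>j<n. 0 \<le> c j" "0 < (\<Sum>j<n. c j)" "u < n" "v < n" "u \<noteq> v" "0 \<le> \<delta>"
    "c v + \<delta> \<le> c u - \<delta>"
  shows "Fm m n q c \<le> Fm m n q (c(u := c u - \<delta>, v := c v + \<delta>))"
proof -
  let ?c' = "c(u := c u - \<delta>, v := c v + \<delta>)"
  define x0 where "x0 = (\<lambda>j. if j < n then sqrt (c j) else 0)"
  have x0: "\<forall>j. 0 \<le> x0 j" using assms(2) by (simp add: x0_def)
  have cu: "0 \<le> c u" "0 \<le> c v" using assms(2,4,5) by auto
  define s where "s = c u + c v"
  define y where "y = (sqrt (c u), sqrt (c v))"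
  define y' where "y' = (sqrt (c u - \<delta>), sqrt (c v + \<delta>))"
  have s0: "0 \<le> s" using cu by (simp add: s_def)
  have yY: "y \<in> Ys s" using cu by (simp add: y_def Ys_def s_def)
  have yY': "y' \<in> Ys s" using cu assms(7,8) by (simp add: y'_def Ys_def s_def)
  have prod: "fst y * snd y \<le> fst y' * snd y'"
  proof -
    have "c u * c v \<le> (c u - \<delta>) * (c v + \<delta>)"
    proof -
      have "(c u - \<delta>) * (c v + \<delta>) - c u * c v = \<delta> * (c u - c v - \<delta>)" by (simp add: algebra_simps)
      moreover have "0 \<le> \<delta> * (c u - c v - \<delta>)" using assms(7,8) by simp
      ultimately show ?thesis by simp
    qed
    then have "sqrt (c u * c v) \<le> sqrt ((c u - \<delta>) * (c v + \<delta>))" by simp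
    then show ?thesis by (simp add: y_def y'_def real_sqrt_mult)
  qed
  have G: "Gf m n q (x0(u := fst y, v := snd y)) \<le> Gf m n q (x0(u := fst y', v := snd y'))"
    by (rule Gf_pair_mono[OF x0 assms(4,5,6) s0 yY yY' prod])
  have e1: "\<forall>j<n. (x0(u := fst y, v := snd y)) j = sqrt (c j)" by (simp add: x0_def y_def)
  have e2: "\<forall>j<n. (x0(u := fst y', v := snd y')) j = sqrt (?c' j)" using assms(6) by (simp add: x0_def y'_def)
  have N1: "(\<Sum>j<n. (sqrt (c j))\<^sup>2) = (\<Sum>j<n. c j)" using assms(2) by (intro sum.cong) auto
  have sumc': "(\<Sum>j<n. ?c' j) = (\<Sum>j<n. c j)"
    using sum_split2[OF assms(4,5,6), of ?c'] sum_split2[OF assms(4,5,6), of c] assms(6) by simp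
  have nn': "\<forall>j<n. 0 \<le> ?c' j" using assms(2,7,8) cu by auto
  have N2: "(\<Sum>j<n. (sqrt (?c' j))\<^sup>2) = (\<Sum>j<n. c j)"
    using nn' sumc' by (subst sum.cong[OF refl, of _ _ ?c']) auto
  let ?D = "real (card (signmats m n)) * (real m * (\<Sum>j<n. c j)) ^ q"
  have Dpos: "0 < ?D" using signmats_card_pos assms(1,3) by simp
  have "Fm m n q c = Gf m n q (x0(u := fst y, v := snd y)) / ?D"
  proof -
    have "Fm m n q c = Gf m n q (\<lambda>j. sqrt (c j)) / ?D"
      using moment_Gf[OF assms(1), of "\<lambda>j. sqrt (c j)"] N1 assms(3) by simp
    also have "Gf m n q (\<lambda>j. sqrt (c j)) = Gf m n q (x0(u := fst y, v := snd y))"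
      unfolding Gf_def Qs_def Yr_def using e1 by (intro sum.cong refl arg_cong2[where f = power]) simp_all
    finally show ?thesis .
  qed
  moreover have "Fm m n q ?c' = Gf m n q (x0(u := fst y', v := snd y')) / ?D"
  proof -
    have "Fm m n q ?c' = Gf m n q (\<lambda>j. sqrt (?c' j)) / ?D"
      using moment_Gf[OF assms(1), of "\<lambda>j. sqrt (?c' j)"] N2 assms(3) by simp
    also have "Gf m n q (\<lambda>j. sqrt (?c' j)) = Gf m n q (x0(u := fst y', v := snd y'))"
      unfolding Gf_def Qs_def Yr_def using e2 by (intro sum.cong refl arg_cong2[where f = power]) simp_all
    finally show ?thesis .
  qed
  ultimately show ?thesis using G Dpos by (simp add: divide_right_mono)
qed

section \<open>Permutation invariance\<close>

lemma moment_perm: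
  assumes "p permutes {..<n}"
  shows "moment m n q (x \<circ> p) = moment m n q x"
proof -
  let ?psi = "\<lambda>S i j. S i (p j)"
  let ?psi' = "\<lambda>S i j. S i (inv p j)"
  have ip: "inv p permutes {..<n}" using permutes_inv[OF assms] .
  have dist: "distortion m n (?psi S) (x \<circ> p) = distortion m n S x" for S
  proof -
    have a: "(\<Sum>j<n. Phi_of m (?psi S) i j * (x \<circ> p) j) = (\<Sum>j<n. Phi_of m S i j * x j)" for i
      using sum.permute[OF assms, of "\<lambda>j. Phi_of m S i j * x j"] by (simp add: Phi_of_def o_def)
    have b: "(\<Sum>j<n. ((x \<circ> p) j)\<^sup>2) = (\<Sum>j<n. (x j)\<^sup>2)"
      using sum.permute[OF assms, of "\<lambda>j. (x j)\<^sup>2"] by (simp add: o_def)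
    show ?thesis unfolding distortion_def a b ..
  qed
  have inS: "?psi S \<in> signmats m n" if "S \<in> signmats m n" for S
  proof (rule signmats_I)
    fix i j assume "i < m" "j < n"
    then show "?psi S i j = 1 \<or> ?psi S i j = -1"
      using signmats_D[OF that] permutes_in_image[OF assms] by auto
  next
    fix i j assume h: "\<not> (i < m \<and> j < n)"
    show "?psi S i j = 0"
    proof (cases "j < n")
      case True then show ?thesis using h signmats_D0[OF that] permutes_in_image[OF assms] by auto
    next
      case False then show ?thesis using h signmats_D0[OF that] permutes_not_in[OF assms] by auto
    qed
  qed
  have inS': "?psi' S \<in> signmats m n" if "S \<in> signmats m n" for S
  proof (rule signmats_I)
    fix i j assume "i < m" "j < n"
    then show "?psi' S i j = 1 \<or> ?psi' S i j = -1"
      using signmats_D[OF that] permutes_in_image[OF ip] by auto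
  next
    fix i j assume h: "\<not> (i < m \<and> j < n)"
    show "?psi' S i j = 0"
    proof (cases "j < n")
      case True then show ?thesis using h signmats_D0[OF that] permutes_in_image[OF ip] by auto
    next
      case False then show ?thesis using h signmats_D0[OF that] permutes_not_in[OF ip] by auto
    qed
  qed
  have "(\<Sum>S\<in>signmats m n. (distortion m n S (x \<circ> p)) ^ q) = (\<Sum>S\<in>signmats m n. (distortion m n S x) ^ q)"
  proof (rule sum.reindex_bij_witness[of _ ?psi ?psi'])
    fix S assume S: "S \<in> signmats m n"
    have pp: "?psi (?psi' S) = S" using permutes_inverses(2)[OF assms] by simp
    show "?psi (?psi' S) = S" by (fact pp)
    show "?psi' S \<in> signmats m n" using inS' S .
    show "(distortion m n (?psi' S) x) ^ q = (distortion m n S (x \<circ> p)) ^ q"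
      using dist[of "?psi' S"] pp by simp
  next
    fix S assume S: "S \<in> signmats m n"
    show "?psi' (?psi S) = S" using permutes_inverses(1)[OF assms] by simp
    show "?psi S \<in> signmats m n" using inS S .
  qed
  then show ?thesis unfolding moment_def integral_pmf_of_set[OF signmats_ne signmats_finite] by simp
qed

definition sL :: "nat \<Rightarrow> (nat \<Rightarrow> real) \<Rightarrow> real list" where
  "sL n c = rev (sort (map c [0..<n]))"

definition srt :: "nat \<Rightarrow> (nat \<Rightarrow> real) \<Rightarrow> nat \<Rightarrow> real" where
  "srt n c = (\<lambda>i. if i < n then sL n c ! i else 0)"

lemma sL_len: "length (sL n c) = n" by (simp add: sL_def)

lemma srt_perm: "\<exists>p. p permutes {..<n} \<and> (\<forall>i<n. srt n c i = c (p i))"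
proof -
  have "mset (sL n c) = mset (map c [0..<n])" by (simp add: sL_def)
  then obtain p where p: "p permutes {..<length (map c [0..<n])}" "permute_list p (map c [0..<n]) = sL n c"
    by (rule mset_eq_permutation)
  have "srt n c i = c (p i)" if "i < n" for i
  proof -
    have "srt n c i = permute_list p (map c [0..<n]) ! i" using that p(2) by (simp add: srt_def)
    also have "\<dots> = map c [0..<n] ! p i" using permute_list_nth[OF p(1)] that by simp
    also have "\<dots> = c (p i)" using permutes_in_image[OF p(1)] that by simp
    finally show ?thesis .
  qed
  then show ?thesis using p(1) by auto
qed

lemma srt_dec: "i \<le> j \<Longrightarrow> j < n \<Longrightarrow> srt n c j \<le> srt n c i"
proof -
  assume ij: "i \<le> j" "j < n"
  have "sorted_wrt (\<lambda>x y. y \<le> x) (sL n c)"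
    unfolding sL_def sorted_wrt_rev by simp
  then show ?thesis
    using ij sorted_wrt_nth_less[of "\<lambda>x y. y \<le> x" "sL n c" i j] by (cases "i = j") (auto simp: srt_def sL_len)
qed

lemma top_sum_srt: "k \<le> n \<Longrightarrow> top_sum n c k = (\<Sum>i<k. srt n c i)"
proof -
  assume k: "k \<le> n"
  have "top_sum n c k = sum_list (take k (sL n c))" by (simp add: top_sum_def sL_def)
  also have "\<dots> = (\<Sum>i = 0..<length (take k (sL n c)). take k (sL n c) ! i)" by (rule sum_list_sum_nth)
  also have "\<dots> = (\<Sum>i<k. srt n c i)"
    using k by (intro sum.cong) (auto simp: sL_len srt_def min_def)
  finally show ?thesis .
qed

lemma srt_sum: "(\<Sum>i<n. srt n c i) = (\<Sum>i<n. c i)"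
proof -
  obtain p where p: "p permutes {..<n}" "\<forall>i<n. srt n c i = c (p i)" using srt_perm by blast
  have "(\<Sum>i<n. srt n c i) = (\<Sum>i<n. (c \<circ> p) i)" using p(2) by simp
  also have "\<dots> = (\<Sum>i<n. c i)" using sum.permute[OF p(1), of c] by simp
  finally show ?thesis .
qed

lemma srt_nonneg: "\<forall>j<n. 0 \<le> c j \<Longrightarrow> i < n \<Longrightarrow> 0 \<le> srt n c i"
proof -
  assume c: "\<forall>j<n. 0 \<le> c j" and i: "i < n"
  obtain p where p: "p permutes {..<n}" "\<forall>i<n. srt n c i = c (p i)" using srt_perm by blast
  have "p i < n" using permutes_in_image[OF p(1)] i by simp
  then show ?thesis using p(2) i c by simp
qed

lemma Fm_srt: "Fm m n q (srt n c) = Fm m n q c"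
proof -
  obtain p where p: "p permutes {..<n}" "\<forall>i<n. srt n c i = c (p i)" using srt_perm by blast
  have "Fm m n q (srt n c) = moment m n q ((\<lambda>j. sqrt (c j)) \<circ> p)"
    by (rule moment_cong) (use p(2) in simp)
  also have "\<dots> = Fm m n q c" by (rule moment_perm[OF p(1)])
  finally show ?thesis .
qed



lemma sum_lt_split:
  fixes f :: "nat \<Rightarrow> real"
  assumes "j \<le> k"
  shows "(\<Sum>l<k. f l) = (\<Sum>l<j. f l) + (\<Sum>l\<in>{j..<k}. f l)"
proof -
  have "(\<Sum>l\<in>{0..<j}. f l) + (\<Sum>l\<in>{j..<k}. f l) = (\<Sum>l\<in>{0..<k}. f l)"
    by (rule sum.atLeastLessThan_concat) (use assms in auto)
  then show ?thesis by (simp add: atLeast0LessThan)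
qed

lemma core:
  assumes m: "m > 0"
    and adec: "\<forall>i j. i \<le> j \<longrightarrow> j < n \<longrightarrow> a j \<le> a i"
    and anonneg: "\<forall>j<n. 0 \<le> a j"
  shows "(\<forall>j<n. 0 \<le> b j) \<longrightarrow> (\<forall>k\<le>n. (\<Sum>l<k. a l) \<le> (\<Sum>l<k. b l)) \<longrightarrow>
         (\<Sum>l<n. a l) = (\<Sum>l<n. b l) \<longrightarrow> 0 < (\<Sum>l<n. b l) \<longrightarrow> Fm m n q b \<le> Fm m n q a"
proof (induction "card {l. l < n \<and> a l \<noteq> b l}" arbitrary: b rule: less_induct)
  case less
  show ?case
  proof (intro impI)
    assume bnn: "\<forall>j<n. 0 \<le> b j" and pre: "\<forall>k\<le>n. (\<Sum>l<k. a l) \<le> (\<Sum>l<k. b l)"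
      and tot: "(\<Sum>l<n. a l) = (\<Sum>l<n. b l)" and pos: "0 < (\<Sum>l<n. b l)"
    define D where "D = {l. l < n \<and> a l \<noteq> b l}"
    have finD: "finite D" by (simp add: D_def)
    show "Fm m n q b \<le> Fm m n q a"
    proof (cases "D = {}")
      case True
      then have "\<forall>j<n. sqrt (b j) = sqrt (a j)" by (auto simp: D_def)
      then show ?thesis using moment_cong[of n "\<lambda>j. sqrt (b j)" "\<lambda>j. sqrt (a j)" m q] by simp
    next
      case False
      define l0 where "l0 = Min D"
      have l0D: "l0 \<in> D" using False finD by (simp add: l0_def)
      have l0n: "l0 < n" using l0D by (simp add: D_def)
      have below: "a l = b l" if "l < l0" for l
      proof (rule ccontr)
        assume "a l \<noteq> b l"
        then have "l \<in> D" using that l0n by (simp add: D_def)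
        then have "l0 \<le> l" using finD by (simp add: l0_def)
        then show False using that by simp
      qed
      have "(\<Sum>l<Suc l0. a l) \<le> (\<Sum>l<Suc l0. b l)" using pre l0n Suc_leI by blast
      moreover have "(\<Sum>l<l0. a l) = (\<Sum>l<l0. b l)" using below by simp
      ultimately have "a l0 \<le> b l0" by simp
      then have l0lt: "a l0 < b l0" using l0D by (simp add: D_def)
      define Lt where "Lt = {l. l < n \<and> a l < b l}"
      have finLt: "finite Lt" by (simp add: Lt_def)
      have Ltne: "Lt \<noteq> {}" using l0lt l0n by (auto simp: Lt_def)
      define j where "j = Max Lt"
      have jLt: "j \<in> Lt" using finLt Ltne by (simp add: j_def)
      have jn: "j < n" and jlt: "a j < b j" using jLt by (auto simp: Lt_def)
      have after: "b l \<le> a l" if "j < l" "l < n" for l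
      proof (rule ccontr)
        assume "\<not> b l \<le> a l"
        then have "l \<in> Lt" using that by (simp add: Lt_def)
        then have "l \<le> j" using finLt by (simp add: j_def)
        then show False using that by simp
      qed
      define Gt where "Gt = {l. j < l \<and> l < n \<and> b l < a l}"
      have finGt: "finite Gt" by (simp add: Gt_def)
      have Gtne: "Gt \<noteq> {}"
      proof
        assume Ge: "Gt = {}"
        have eqa: "a l = b l" if "j < l" "l < n" for l
          using after[OF that] Ge that by (auto simp: Gt_def)
        have "(\<Sum>l<n. b l - a l) = (\<Sum>l<j. b l - a l) + (\<Sum>l\<in>{j..<n}. b l - a l)"
          by (rule sum_lt_split) (use jn in simp)
        also have "(\<Sum>l\<in>{j..<n}. b l - a l) = (b j - a j) + (\<Sum>l\<in>{Suc j..<n}. b l - a l)"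
          using jn by (simp add: sum.atLeast_Suc_lessThan)
        also have "(\<Sum>l\<in>{Suc j..<n}. b l - a l) = 0" using eqa by (intro sum.neutral) auto
        finally have "(\<Sum>l<n. b l - a l) = (\<Sum>l<j. b l - a l) + (b j - a j)" by simp
        moreover have "0 \<le> (\<Sum>l<j. b l - a l)" using pre jn by (simp add: sum_subtractf)
        ultimately have "0 < (\<Sum>l<n. b l - a l)" using jlt by simp
        then show False using tot by (simp add: sum_subtractf)
      qed
      define k where "k = Min Gt"
      have kGt: "k \<in> Gt" using finGt Gtne by (simp add: k_def)
      have jk: "j < k" and kn: "k < n" and klt: "b k < a k" using kGt by (auto simp: Gt_def)
      have between: "a l = b l" if "j < l" "l < k" for l
      proof (rule ccontr)
        assume "a l \<noteq> b l"
        then have "b l < a l" using after[of l] that kn by simp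
        then have "l \<in> Gt" using that kn by (simp add: Gt_def)
        then have "k \<le> l" using finGt by (simp add: k_def)
        then show False using that by simp
      qed
      define \<delta> where "\<delta> = min (b j - a j) (a k - b k)"
      have dpos: "0 < \<delta>" using jlt klt by (simp add: \<delta>_def)
      define b' where "b' = b(j := b j - \<delta>, k := b k + \<delta>)"
      have jnk: "j \<noteq> k" using jk by simp
      have b'_alt: "b' l = b l - (if l = j then \<delta> else 0) + (if l = k then \<delta> else 0)" for l
        using jnk by (simp add: b'_def)
      have psum: "(\<Sum>l<k'. b' l) = (\<Sum>l<k'. b l) - (if j < k' then \<delta> else 0) + (if k < k' then \<delta> else 0)" for k'
        by (simp add: b'_alt sum.distrib sum_subtractf)
      have ajk: "a k \<le> a j" using adec jk kn by simp
      have cond: "b k + \<delta> \<le> b j - \<delta>"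
      proof -
        have "b j - \<delta> \<ge> a j" "b k + \<delta> \<le> a k" by (auto simp: \<delta>_def)
        then show ?thesis using ajk by simp
      qed
      have bnn': "\<forall>l<n. 0 \<le> b' l"
      proof (intro allI impI)
        fix l assume l: "l < n"
        have "b j - \<delta> \<ge> a j" by (simp add: \<delta>_def)
        then show "0 \<le> b' l" using bnn l anonneg jn dpos jnk by (auto simp: b'_def)
      qed
      have pre': "\<forall>k'\<le>n. (\<Sum>l<k'. a l) \<le> (\<Sum>l<k'. b' l)"
      proof (intro allI impI)
        fix k' assume k': "k' \<le> n"
        show "(\<Sum>l<k'. a l) \<le> (\<Sum>l<k'. b' l)"
        proof (cases "j < k' \<and> k' \<le> k")
          case True
          have "(\<Sum>l<k'. b l - a l) = (\<Sum>l<j. b l - a l) + (\<Sum>l\<in>{j..<k'}. b l - a l)"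
            by (rule sum_lt_split) (use True in simp)
          also have "(\<Sum>l\<in>{j..<k'}. b l - a l) = (b j - a j) + (\<Sum>l\<in>{Suc j..<k'}. b l - a l)"
            using True by (simp add: sum.atLeast_Suc_lessThan)
          also have "(\<Sum>l\<in>{Suc j..<k'}. b l - a l) = 0" using between True by (intro sum.neutral) auto
          finally have "(\<Sum>l<k'. b l - a l) = (\<Sum>l<j. b l - a l) + (b j - a j)" by simp
          moreover have "0 \<le> (\<Sum>l<j. b l - a l)" using pre jn by (simp add: sum_subtractf)
          moreover have "\<delta> \<le> b j - a j" by (simp add: \<delta>_def)
          ultimately have "(\<Sum>l<k'. a l) \<le> (\<Sum>l<k'. b l) - \<delta>" by (simp add: sum_subtractf)
          then show ?thesis using psum[of k'] True by simp
        next
          case False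
          then have "(\<Sum>l<k'. b' l) = (\<Sum>l<k'. b l)" using psum[of k'] jk by auto
          then show ?thesis using pre k' by simp
        qed
      qed
      have tot': "(\<Sum>l<n. a l) = (\<Sum>l<n. b' l)" using psum[of n] jn kn tot by simp
      have pos': "0 < (\<Sum>l<n. b' l)" using psum[of n] jn kn pos by simp
      have Dsub: "{l. l < n \<and> a l \<noteq> b' l} \<subset> D"
      proof
        show "{l. l < n \<and> a l \<noteq> b' l} \<subseteq> D"
        proof
          fix l assume "l \<in> {l. l < n \<and> a l \<noteq> b' l}"
          then show "l \<in> D" using jlt klt by (cases "l = j \<or> l = k") (auto simp: D_def b'_def)
        qed
        have jD: "j \<in> D" "k \<in> D" using jlt klt jn kn by (auto simp: D_def)
        have "b' j = a j \<or> b' k = a k" using jnk by (auto simp: b'_def \<delta>_def min_def)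
        then show "{l. l < n \<and> a l \<noteq> b' l} \<noteq> D" using jD by auto
      qed
      have lessc: "card {l. l < n \<and> a l \<noteq> b' l} < card {l. l < n \<and> a l \<noteq> b l}"
        using psubset_card_mono[OF finD Dsub] by (simp add: D_def)
      have IH: "Fm m n q b' \<le> Fm m n q a"
        using less(1)[OF lessc] bnn' pre' tot' pos' by blast
      have "Fm m n q b \<le> Fm m n q b'"
        using T_mono[OF m bnn pos jn kn jnk less_imp_le[OF dpos] cond] by (simp add: b'_def)
      then show ?thesis using IH by simp
    qed
  qed
qed

theorem schur:
  assumes "m > 0"
  shows "schur_concave_on n (sq_domain n) (\<lambda>a. moment m n q (\<lambda>j. sqrt (a j)))"
  unfolding schur_concave_on_def
proof (intro ballI impI)
  fix a b assume a: "a \<in> sq_domain n" and b: "b \<in> sq_domain n" and maj: "majorized n a b"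
  have ann: "\<forall>j<n. 0 \<le> a j" and bnn: "\<forall>j<n. 0 \<le> b j" using a b by (auto simp: sq_domain_def)
  obtain j0 where j0: "j0 < n" "b j0 \<noteq> 0" using b by (auto simp: sq_domain_def)
  have bpos: "0 < (\<Sum>j<n. b j)"
  proof -
    have "b j0 \<le> (\<Sum>j<n. b j)" by (rule member_le_sum) (use j0 bnn in auto)
    then show ?thesis using j0 bnn by (metis less_eq_real_def order_le_less_trans)
  qed
  let ?as = "srt n a" and ?bs = "srt n b"
  have dec: "\<forall>i j. i \<le> j \<longrightarrow> j < n \<longrightarrow> ?as j \<le> ?as i" using srt_dec by blast
  have asnn: "\<forall>j<n. 0 \<le> ?as j" using srt_nonneg[OF ann] by blast
  have bsnn: "\<forall>j<n. 0 \<le> ?bs j" using srt_nonneg[OF bnn] by blast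
  have pre: "\<forall>k\<le>n. (\<Sum>l<k. ?as l) \<le> (\<Sum>l<k. ?bs l)"
    using maj by (auto simp: majorized_def top_sum_srt)
  have tot: "(\<Sum>l<n. ?as l) = (\<Sum>l<n. ?bs l)" using maj by (simp add: majorized_def srt_sum)
  have pos: "0 < (\<Sum>l<n. ?bs l)" using bpos by (simp add: srt_sum)
  have "Fm m n q ?bs \<le> Fm m n q ?as"
    using core[OF assms dec asnn] bsnn pre tot pos by blast
  then show "moment m n q (\<lambda>j. sqrt (b j)) \<le> moment m n q (\<lambda>j. sqrt (a j))" by (simp add: Fm_srt)
qed



definition cntT :: "nat set \<Rightarrow> (nat \<Rightarrow> bool) \<Rightarrow> nat" where
  "cntT T f = card {j \<in> T. f j}"

lemma Hset_pmf:
  "pmf_of_set (Hset m n) = Pi_pmf {..<m} (\<lambda>_. False) (\<lambda>_. Pi_pmf {..<n} False (\<lambda>_. bernoulli_pmf (1/2)))"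
proof -
  have inner: "Pi_pmf {..<n} False (\<lambda>_. bernoulli_pmf (1/2)) = pmf_of_set (PiE_dflt {..<n} False (\<lambda>_. UNIV))"
    unfolding bernoulli_pmf_half_conv_pmf_of_set by (rule Pi_pmf_of_set) auto
  have ne: "PiE_dflt {..<n} False (\<lambda>_. UNIV) \<noteq> {}"
  proof -
    have "(\<lambda>_. False) \<in> PiE_dflt {..<n} False (\<lambda>_. UNIV)" by (simp add: PiE_dflt_def)
    then show ?thesis by blast
  qed
  have fin: "finite (PiE_dflt {..<n} False (\<lambda>_::nat. UNIV :: bool set))"
    by (intro finite_PiE_dflt) auto
  show ?thesis
    unfolding inner Hset_def by (rule Pi_pmf_of_set[symmetric]) (use ne fin in auto)
qed

lemma signmats_pmf:
  "pmf_of_set (signmats m n) = map_pmf (toS m n) (Pi_pmf {..<m} (\<lambda>_. False) (\<lambda>_. Pi_pmf {..<n} False (\<lambda>_. bernoulli_pmf (1/2))))"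
proof -
  have "Hset m n \<noteq> {}"
  proof
    assume "Hset m n = {}"
    then have "signmats m n = {}" using bij_betw_imp_surj_on[OF bij_toS[of m n]] by simp
    then show False using signmats_ne by simp
  qed
  then show ?thesis
    unfolding Hset_pmf[symmetric] using map_pmf_of_set_bij_betw[OF bij_toS _ Hset_finite] by simp
qed

lemma binom_pmf:
  assumes "T \<subseteq> {..<n}" "card T = K"
  shows "map_pmf (cntT T) (Pi_pmf {..<n} False (\<lambda>_. bernoulli_pmf (1/2))) = binomial_pmf K (1/2)"
proof -
  have finT: "finite T" using assms(1) finite_subset by blast
  have "binomial_pmf K (1/2) = map_pmf (\<lambda>f. card {x\<in>T. f x}) (Pi_pmf T False (\<lambda>_. bernoulli_pmf (1/2)))"
    by (rule binomial_pmf_altdef'[OF finT assms(2)]) simp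
  also have "Pi_pmf T False (\<lambda>_. bernoulli_pmf (1/2)) =
      map_pmf (\<lambda>f x. if x \<in> T then f x else False) (Pi_pmf {..<n} False (\<lambda>_. bernoulli_pmf (1/2)))"
    by (rule Pi_pmf_subset) (use assms(1) in auto)
  also have "map_pmf (\<lambda>f. card {x\<in>T. f x}) \<dots> = map_pmf (cntT T) (Pi_pmf {..<n} False (\<lambda>_. bernoulli_pmf (1/2)))"
    unfolding map_pmf_comp cntT_def by (intro map_pmf_cong refl arg_cong[where f = card]) auto
  finally show ?thesis by simp
qed

lemma sum_signs:
  assumes "finite T"
  shows "(\<Sum>j\<in>T. if f j then 1 else -1 :: real) = 2 * real (cntT T f) - real (card T)"
proof -
  have "(\<Sum>j\<in>T. if f j then 1 else -1 :: real) = real (card {j\<in>T. f j}) - real (card {j\<in>T. \<not> f j})"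
    using assms by (simp add: sum.If_cases Int_def)
  moreover have "card T = card {j\<in>T. f j} + card {j\<in>T. \<not> f j}"
  proof -
    have "T = {j\<in>T. f j} \<union> {j\<in>T. \<not> f j}" by auto
    then have "card T = card ({j\<in>T. f j} \<union> {j\<in>T. \<not> f j})" by simp
    also have "\<dots> = card {j\<in>T. f j} + card {j\<in>T. \<not> f j}"
      by (rule card_Un_disjoint) (use assms in auto)
    finally show ?thesis .
  qed
  ultimately show ?thesis by (simp add: cntT_def)
qed

definition Fst :: "nat \<Rightarrow> nat \<Rightarrow> nat \<Rightarrow> (nat \<Rightarrow> nat) \<Rightarrow> real" where
  "Fst m K q B = ((1 / real m) * (\<Sum>i<m. ((real (B i) - real K / 2) / sqrt (real K / 4))\<^sup>2 - 1)) ^ q"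

lemma dist_toS:
  assumes "m > 0" "T \<subseteq> {..<n}" "card T = K" "K > 0" "t \<noteq> 0" "\<forall>j<n. x j = (if j \<in> T then t else 0)"
  shows "(distortion m n (toS m n h) x) ^ q = Fst m K q (\<lambda>i. cntT T (h i))"
proof -
  have finT: "finite T" using assms(2) finite_subset by blast
  have rs: "(\<Sum>j<n. f j * x j) = t * (\<Sum>j\<in>T. f j)" for f
  proof -
    have "(\<Sum>j<n. f j * x j) = (\<Sum>j<n. if j \<in> T then t * f j else 0)"
      using assms(6) by (intro sum.cong) auto
    also have "\<dots> = (\<Sum>j\<in>{..<n} \<inter> T. t * f j)" by (simp add: sum.inter_restrict)
    also have "{..<n} \<inter> T = T" using assms(2) by auto
    finally show ?thesis by (simp add: sum_distrib_left)
  qed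
  have N: "(\<Sum>j<n. (x j)\<^sup>2) = real K * t\<^sup>2"
  proof -
    have "(\<Sum>j<n. (x j)\<^sup>2) = (\<Sum>j<n. (\<lambda>_. x j) j * x j)" by (simp add: power2_eq_square)
    also have "\<dots> = t * (\<Sum>j\<in>T. t)"
    proof -
      have "(\<Sum>j<n. (\<lambda>_. x j) j * x j) = (\<Sum>j<n. (\<lambda>j. if j \<in> T then t else 0) j * x j)"
        using assms(6) by (intro sum.cong) auto
      also have "\<dots> = t * (\<Sum>j\<in>T. if j \<in> T then t else 0)" by (rule rs)
      finally show ?thesis by simp
    qed
    finally show ?thesis using assms(3) by (simp add: power2_eq_square)
  qed
  have row: "(\<Sum>j<n. Phi_of m (toS m n h) i j * x j)\<^sup>2 = t\<^sup>2 * (2 * real (cntT T (h i)) - real K)\<^sup>2 / real m"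
    if i: "i < m" for i
  proof -
    have "(\<Sum>j<n. Phi_of m (toS m n h) i j * x j) = t * (\<Sum>j\<in>T. Phi_of m (toS m n h) i j)" by (rule rs)
    also have "(\<Sum>j\<in>T. Phi_of m (toS m n h) i j) = (\<Sum>j\<in>T. if h i j then 1 else -1) / sqrt (real m)"
      unfolding sum_divide_distrib using i assms(2) by (intro sum.cong) (auto simp: Phi_of_def toS_def)
    also have "\<dots> = (2 * real (cntT T (h i)) - real K) / sqrt (real m)"
      using sum_signs[OF finT] assms(3) by simp
    finally show ?thesis using assms(1) by (simp add: power_mult_distrib power_divide)
  qed
  have trm: "t\<^sup>2 * (2 * real c - real K)\<^sup>2 / real m / (real K * t\<^sup>2) =
      (1 / real m) * ((real c - real K / 2) / sqrt (real K / 4))\<^sup>2" for c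
  proof -
    have s4: "(sqrt (real K / 4))\<^sup>2 = real K / 4" by simp
    have "((real c - real K / 2) / sqrt (real K / 4))\<^sup>2 = (real c - real K / 2)\<^sup>2 / (real K / 4)"
      by (simp add: power_divide)
    also have "\<dots> = (2 * real c - real K)\<^sup>2 / real K"
      using assms(4) by (simp add: field_simps power2_eq_square)
    finally show ?thesis using assms(4,5) assms(1) by (simp add: field_simps power2_eq_square)
  qed
  have "distortion m n (toS m n h) x = (\<Sum>i<m. (1 / real m) * ((real (cntT T (h i)) - real K / 2) / sqrt (real K / 4))\<^sup>2) - 1"
  proof -
    have "distortion m n (toS m n h) x = (\<Sum>i<m. (\<Sum>j<n. Phi_of m (toS m n h) i j * x j)\<^sup>2 / (real K * t\<^sup>2)) - 1"
      unfolding distortion_def N sum_divide_distrib ..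
    also have "(\<Sum>i<m. (\<Sum>j<n. Phi_of m (toS m n h) i j * x j)\<^sup>2 / (real K * t\<^sup>2)) =
        (\<Sum>i<m. (1 / real m) * ((real (cntT T (h i)) - real K / 2) / sqrt (real K / 4))\<^sup>2)"
    proof (rule sum.cong[OF refl])
      fix i assume "i \<in> {..<m}"
      then have "(\<Sum>j<n. Phi_of m (toS m n h) i j * x j)\<^sup>2 / (real K * t\<^sup>2) =
          t\<^sup>2 * (2 * real (cntT T (h i)) - real K)\<^sup>2 / real m / (real K * t\<^sup>2)" using row by simp
      also have "\<dots> = (1 / real m) * ((real (cntT T (h i)) - real K / 2) / sqrt (real K / 4))\<^sup>2" by (rule trm)
      finally show "(\<Sum>j<n. Phi_of m (toS m n h) i j * x j)\<^sup>2 / (real K * t\<^sup>2) =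
          (1 / real m) * ((real (cntT T (h i)) - real K / 2) / sqrt (real K / 4))\<^sup>2" .
    qed
    finally show ?thesis .
  qed
  also have "\<dots> = (1 / real m) * (\<Sum>i<m. ((real (cntT T (h i)) - real K / 2) / sqrt (real K / 4))\<^sup>2 - 1)"
  proof -
    define A where "A i = ((real (cntT T (h i)) - real K / 2) / sqrt (real K / 4))\<^sup>2" for i
    have "(1 / real m) * (\<Sum>i<m. A i - 1) = (1 / real m) * (\<Sum>i<m. A i) - (1 / real m) * real m"
      by (simp add: sum_subtractf algebra_simps)
    also have "\<dots> = (\<Sum>i<m. (1 / real m) * A i) - 1" using assms(1) by (simp add: sum_distrib_left)
    finally show ?thesis unfolding A_def by simp
  qed
  finally show ?thesis by (simp add: Fst_def)
qed

lemma estar_eq: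
  assumes "m > 0" "T \<subseteq> {..<n}" "card T = K" "K > 0" "t \<noteq> 0" "\<forall>j<n. x j = (if j \<in> T then t else 0)"
  shows "moment m n q x = estar_moment m K q"
proof -
  let ?P = "Pi_pmf {..<m} (\<lambda>_. False) (\<lambda>_. Pi_pmf {..<n} False (\<lambda>_. bernoulli_pmf (1/2)))"
  have "moment m n q x = measure_pmf.expectation ?P (\<lambda>h. (distortion m n (toS m n h) x) ^ q)"
    unfolding moment_def signmats_pmf by simp
  also have "\<dots> = measure_pmf.expectation ?P (\<lambda>h. Fst m K q (\<lambda>i. cntT T (h i)))"
    using dist_toS[OF assms] by simp
  also have "\<dots> = measure_pmf.expectation (map_pmf (\<lambda>h. cntT T \<circ> h) ?P) (Fst m K q)"
    by (simp add: o_def)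
  also have "map_pmf (\<lambda>h. cntT T \<circ> h) ?P = Pi_pmf {..<m} 0 (\<lambda>_. map_pmf (cntT T) (Pi_pmf {..<n} False (\<lambda>_. bernoulli_pmf (1/2))))"
    by (rule Pi_pmf_map[symmetric]) (auto simp: cntT_def)
  also have "\<dots> = Pi_pmf {..<m} 0 (\<lambda>_. binomial_pmf K (1/2))"
    using binom_pmf[OF assms(2,3)] by simp
  finally show ?thesis unfolding estar_moment_def Fst_def by simp
qed



lemma poly_fun_local:
  assumes "poly_fun n P" "\<forall>j<n. a j = b j"
  shows "P a = P b"
proof -
  obtain A c where A: "finite A" "\<forall>\<alpha>\<in>A. \<forall>j\<ge>n. \<alpha> j = (0::nat)"
    "\<forall>a. P a = (\<Sum>\<alpha>\<in>A. c \<alpha> * (\<Prod>j<n. a j ^ \<alpha> j))" using assms(1) by (rule poly_funE)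
  show ?thesis using A(3) assms(2) by simp
qed

lemma nz_pos: "nonzero_vec n x \<Longrightarrow> 0 < (\<Sum>j<n. (x j)\<^sup>2)"
proof -
  assume "nonzero_vec n x"
  then obtain j0 where j0: "j0 < n" "x j0 \<noteq> 0" by (auto simp: nonzero_vec_def)
  have "(x j0)\<^sup>2 \<le> (\<Sum>j<n. (x j)\<^sup>2)" by (rule member_le_sum) (use j0 in auto)
  moreover have "0 < (x j0)\<^sup>2" using j0 by simp
  ultimately show ?thesis by linarith
qed

lemma poly_part:
  assumes "m > 0"
  shows "\<exists>P. poly_fun n P \<and> (\<forall>x. nonzero_vec n x \<longrightarrow>
            (\<Sum>j<n. (x j)\<^sup>2) ^ q * moment m n q x = P (\<lambda>j. (x j)\<^sup>2))"
proof -
  obtain P0 where P0: "poly_fun n P0" "\<forall>x. Gf m n q x = P0 (\<lambda>j. (x j)\<^sup>2)" using Gf_poly by blast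
  let ?c = "1 / (real (card (signmats m n)) * real m ^ q)"
  have "poly_fun n (\<lambda>a. ?c * P0 a)" by (rule poly_scale[OF P0(1)])
  moreover have "(\<Sum>j<n. (x j)\<^sup>2) ^ q * moment m n q x = ?c * P0 (\<lambda>j. (x j)\<^sup>2)" if "nonzero_vec n x" for x
  proof -
    have N: "0 < (\<Sum>j<n. (x j)\<^sup>2)" using nz_pos[OF that] .
    have c: "0 < real (card (signmats m n))" using signmats_card_pos by simp
    have "(\<Sum>j<n. (x j)\<^sup>2) ^ q * moment m n q x =
        (\<Sum>j<n. (x j)\<^sup>2) ^ q * (Gf m n q x / (real (card (signmats m n)) * (real m * (\<Sum>j<n. (x j)\<^sup>2)) ^ q))"
      using moment_Gf[OF assms, where n = n and x = x and q = q] N by simp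
    also have "\<dots> = Gf m n q x / (real (card (signmats m n)) * real m ^ q)"
      using N c assms by (simp add: power_mult_distrib field_simps)
    finally show ?thesis using P0(2) by simp
  qed
  ultimately show ?thesis by blast
qed

lemma moment_sq:
  assumes "m > 0" "nonzero_vec n x" "nonzero_vec n y" "\<forall>j<n. (x j)\<^sup>2 = (y j)\<^sup>2"
  shows "moment m n q x = moment m n q y"
proof -
  obtain P where P: "poly_fun n P" "\<forall>x. nonzero_vec n x \<longrightarrow>
            (\<Sum>j<n. (x j)\<^sup>2) ^ q * moment m n q x = P (\<lambda>j. (x j)\<^sup>2)" using poly_part[OF assms(1)] by blast
  have N: "(\<Sum>j<n. (x j)\<^sup>2) = (\<Sum>j<n. (y j)\<^sup>2)" using assms(4) by simp
  have Np: "0 < (\<Sum>j<n. (x j)\<^sup>2)" using nz_pos[OF assms(2)] .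
  have "P (\<lambda>j. (x j)\<^sup>2) = P (\<lambda>j. (y j)\<^sup>2)" by (rule poly_fun_local[OF P(1)]) (use assms(4) in simp)
  moreover have "(\<Sum>j<n. (x j)\<^sup>2) ^ q * moment m n q x = P (\<lambda>j. (x j)\<^sup>2)" using P(2) assms(2) by blast
  moreover have "(\<Sum>j<n. (y j)\<^sup>2) ^ q * moment m n q y = P (\<lambda>j. (y j)\<^sup>2)" using P(2) assms(3) by blast
  ultimately have "(\<Sum>j<n. (x j)\<^sup>2) ^ q * moment m n q x = (\<Sum>j<n. (x j)\<^sup>2) ^ q * moment m n q y"
    using N by simp
  then show ?thesis using Np by simp
qed

lemma part_b:
  assumes m: "m > 0" and nz: "nonzero_vec n x"
  shows "moment m n q x \<le> estar_moment m (l0 n x) q"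
proof -
  define T where "T = {j. j < n \<and> x j \<noteq> 0}"
  define K where "K = l0 n x"
  have KT: "K = card T" by (simp add: K_def l0_def T_def)
  have Tsub: "T \<subseteq> {..<n}" by (auto simp: T_def)
  have finT: "finite T" using Tsub finite_subset by blast
  have Kpos: "0 < K" using nz finT by (auto simp: KT nonzero_vec_def T_def card_gt_0_iff)
  have Kn: "K \<le> n" using card_mono[OF _ Tsub] by (simp add: KT)
  define a where "a = (\<lambda>j. if j < n then (x j)\<^sup>2 else 0)"
  define N where "N = (\<Sum>j<n. a j)"
  have Na: "N = (\<Sum>j<n. (x j)\<^sup>2)" by (simp add: N_def a_def)
  have Npos: "0 < N" using nz_pos[OF nz] Na by simp
  have ann: "\<forall>j<n. 0 \<le> a j" by (simp add: a_def)
  let ?as = "srt n a"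
  obtain p where p: "p permutes {..<n}" "\<forall>i<n. ?as i = a (p i)" using srt_perm by blast
  have asnn: "\<forall>j<n. 0 \<le> ?as j" using srt_nonneg[OF ann] by blast
  have asdec: "\<And>i j. i \<le> j \<Longrightarrow> j < n \<Longrightarrow> ?as j \<le> ?as i" by (rule srt_dec)
  have assum: "(\<Sum>l<n. ?as l) = N" unfolding N_def by (rule srt_sum)
  have cardnz: "card {l. l < n \<and> ?as l \<noteq> 0} = K"
  proof -
    have img: "p ` {l. l < n \<and> ?as l \<noteq> 0} = T"
    proof
      show "p ` {l. l < n \<and> ?as l \<noteq> 0} \<subseteq> T"
      proof
        fix j assume "j \<in> p ` {l. l < n \<and> ?as l \<noteq> 0}"
        then obtain l where l: "l < n" "?as l \<noteq> 0" "j = p l" by blast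
        have pl: "p l < n" using permutes_in_image[OF p(1)] l(1) by simp
        have "a (p l) \<noteq> 0" using p(2) l(1,2) by simp
        then have "x (p l) \<noteq> 0" using pl by (simp add: a_def)
        then show "j \<in> T" using pl l(3) by (simp add: T_def)
      qed
    next
      show "T \<subseteq> p ` {l. l < n \<and> ?as l \<noteq> 0}"
      proof
        fix j assume j: "j \<in> T"
        have jn: "j < n" using j by (simp add: T_def)
        have ij: "inv p j < n" using permutes_in_image[OF permutes_inv[OF p(1)]] jn by simp
        have pj: "p (inv p j) = j" using permutes_inverses(1)[OF p(1)] .
        have "?as (inv p j) \<noteq> 0" using p(2) ij pj j by (simp add: T_def a_def)
        then have "inv p j \<in> {l. l < n \<and> ?as l \<noteq> 0}" using ij by simp
        then show "j \<in> p ` {l. l < n \<and> ?as l \<noteq> 0}" using pj by (metis image_eqI)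
      qed
    qed
    have "inj_on p {l. l < n \<and> ?as l \<noteq> 0}" using permutes_inj[OF p(1)] by (rule inj_on_subset) simp
    then have "card (p ` {l. l < n \<and> ?as l \<noteq> 0}) = card {l. l < n \<and> ?as l \<noteq> 0}" by (rule card_image)
    then show ?thesis using img KT by simp
  qed
  have tail0: "?as l = 0" if "K \<le> l" "l < n" for l
  proof (rule ccontr)
    assume h: "?as l \<noteq> 0"
    have "{..l} \<subseteq> {l'. l' < n \<and> ?as l' \<noteq> 0}"
    proof
      fix l' assume "l' \<in> {..l}"
      then have "l' \<le> l" by simp
      then have "?as l \<le> ?as l'" using asdec that(2) by blast
      moreover have "0 < ?as l" using h asnn that(2) by (metis less_eq_real_def)
      ultimately show "l' \<in> {l'. l' < n \<and> ?as l' \<noteq> 0}" using \<open>l' \<le> l\<close> that(2) by auto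
    qed
    then have "card {..l} \<le> card {l'. l' < n \<and> ?as l' \<noteq> 0}" by (intro card_mono) auto
    then have "card {..l} \<le> K" using cardnz by simp
    then show False using that by simp
  qed
  define u where "u = (\<lambda>l. if l < K then N / real K else 0)"
  have usum: "(\<Sum>l<k. u l) = real (min k K) * (N / real K)" for k
  proof -
    have "(\<Sum>l<k. u l) = (\<Sum>l\<in>{..<k}. if l \<in> {..<K} then N / real K else 0)"
      by (simp add: u_def)
    also have "\<dots> = (\<Sum>l\<in>{..<k} \<inter> {..<K}. N / real K)"
      by (rule sum.inter_restrict[symmetric]) simp
    also have "{..<k} \<inter> {..<K} = {..<min k K}" by auto
    finally show ?thesis by simp
  qed
  have sumK: "(\<Sum>l<K. ?as l) = N"
  proof -
    have "(\<Sum>l<n. ?as l) = (\<Sum>l<K. ?as l) + (\<Sum>l\<in>{K..<n}. ?as l)" by (rule sum_lt_split[OF Kn])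
    also have "(\<Sum>l\<in>{K..<n}. ?as l) = 0" using tail0 by (intro sum.neutral) auto
    finally show ?thesis using assum by simp
  qed
  have pre: "\<forall>k\<le>n. (\<Sum>l<k. u l) \<le> (\<Sum>l<k. ?as l)"
  proof (intro allI impI)
    fix k assume kn: "k \<le> n"
    show "(\<Sum>l<k. u l) \<le> (\<Sum>l<k. ?as l)"
    proof (cases "K \<le> k")
      case True
      have "(\<Sum>l<k. ?as l) = (\<Sum>l<K. ?as l) + (\<Sum>l\<in>{K..<k}. ?as l)" by (rule sum_lt_split[OF True])
      also have "(\<Sum>l\<in>{K..<k}. ?as l) = 0" using tail0 kn by (intro sum.neutral) auto
      finally have "(\<Sum>l<k. ?as l) = N" using sumK by simp
      moreover have "(\<Sum>l<k. u l) = N" using usum[of k] True Kpos by (simp add: min_def)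
      ultimately show ?thesis by simp
    next
      case False
      then have kK: "k < K" by simp
      define S1 where "S1 = (\<Sum>l<k. ?as l)"
      define S2 where "S2 = (\<Sum>l\<in>{k..<K}. ?as l)"
      have S12: "S1 + S2 = N" using sum_lt_split[of k K "?as"] kK sumK by (simp add: S1_def S2_def)
      have kn': "k < n" using kK Kn by simp
      have b1: "real k * ?as k \<le> S1"
        unfolding S1_def using sum_bounded_below[of "{..<k}" "?as k" ?as] asdec kn' by fastforce
      have b2: "S2 \<le> real (K - k) * ?as k"
      proof -
        have "S2 \<le> real (card {k..<K}) * ?as k"
          unfolding S2_def using sum_bounded_above[of "{k..<K}" ?as "?as k"] asdec Kn by fastforce
        then show ?thesis by simp
      qed
      have "real k * S2 \<le> real k * (real (K - k) * ?as k)" using b2 by (simp add: mult_left_mono)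
      also have "\<dots> = real (K - k) * (real k * ?as k)" by simp
      also have "\<dots> \<le> real (K - k) * S1" using b1 by (simp add: mult_left_mono)
      finally have "real k * S2 \<le> real (K - k) * S1" .
      then have h1: "S1 * real k + S2 * real k \<le> S1 * real K" using kK by (simp add: of_nat_diff algebra_simps)
      have "real k * N = S1 * real k + S2 * real k" using S12 by (simp add: algebra_simps flip: S12)
      then have "real k * N \<le> real K * S1" using h1 by (simp add: mult.commute)
      then have "real k * (N / real K) \<le> S1" using Kpos by (simp add: field_simps)
      then show ?thesis using usum[of k] kK by (simp add: S1_def)
    qed
  qed
  have udec: "\<forall>i j. i \<le> j \<longrightarrow> j < n \<longrightarrow> u j \<le> u i" using Npos by (auto simp: u_def)
  have unn: "\<forall>j<n. 0 \<le> u j" using Npos by (auto simp: u_def)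
  have utot: "(\<Sum>l<n. u l) = (\<Sum>l<n. ?as l)" using usum[of n] Kn Kpos assum by (simp add: min_def)
  have aspos: "0 < (\<Sum>l<n. ?as l)" using assum Npos by simp
  have le: "Fm m n q ?as \<le> Fm m n q u"
    using core[OF m udec unn] asnn pre utot aspos by blast
  have "moment m n q x = Fm m n q a"
  proof (rule moment_sq[OF m nz])
    show "nonzero_vec n (\<lambda>j. sqrt (a j))" using nz by (auto simp: nonzero_vec_def a_def)
    show "\<forall>j<n. (x j)\<^sup>2 = (sqrt (a j))\<^sup>2" by (simp add: a_def)
  qed
  also have "\<dots> = Fm m n q ?as" by (simp add: Fm_srt)
  also have "\<dots> \<le> Fm m n q u" by (fact le)
  also have "Fm m n q u = estar_moment m K q"
  proof (rule estar_eq[OF m _ _ Kpos])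
    show "{..<K} \<subseteq> {..<n}" using Kn by auto
    show "card {..<K} = K" by simp
    show "sqrt (N / real K) \<noteq> 0" using Npos Kpos by simp
    show "\<forall>j<n. sqrt (u j) = (if j \<in> {..<K} then sqrt (N / real K) else 0)" by (simp add: u_def)
  qed
  finally show ?thesis by (simp add: K_def)
qed

lemma part_b_eq:
  assumes m: "m > 0" and nz: "nonzero_vec n x" and eq: "\<forall>j<n. \<forall>k<n. x j = x k"
  shows "moment m n q x = estar_moment m (l0 n x) q"
proof -
  obtain j0 where j0: "j0 < n" "x j0 \<noteq> 0" using nz by (auto simp: nonzero_vec_def)
  have nzall: "\<forall>j<n. x j \<noteq> 0" using eq j0 by metis
  have "{j. j < n \<and> x j \<noteq> 0} = {..<n}" using nzall by blast
  then have l0: "l0 n x = n" by (simp add: l0_def)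
  have all: "\<forall>j<n. x j = (if j \<in> {..<n} then x j0 else 0)"
  proof (intro allI impI)
    fix j assume jn: "j < n"
    have "x j = x j0" using eq jn j0(1) by blast
    then show "x j = (if j \<in> {..<n} then x j0 else 0)" using jn by simp
  qed
  show ?thesis unfolding l0
    by (rule estar_eq[OF m _ _ _ j0(2) all]) (use j0 in auto)
qed

theorem theorem1:
  fixes m n :: nat
  assumes "m > 0" and "n > 0"
  shows "(\<forall>q::nat. q > 0 \<longrightarrow>
            (\<forall>x y. nonzero_vec n x \<longrightarrow> (\<forall>j<n. (x j)\<^sup>2 = (y j)\<^sup>2) \<longrightarrow>
                   moment m n q x = moment m n q y)
          \<and> (\<exists>P. poly_fun n P \<and>
                 (\<forall>x. nonzero_vec n x \<longrightarrow>
                    (\<Sum>j<n. (x j)\<^sup>2) ^ q * moment m n q x = P (\<lambda>j. (x j)\<^sup>2)))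
          \<and> schur_concave_on n (sq_domain n) (\<lambda>a. moment m n q (\<lambda>j. sqrt (a j))))
       \<and> (\<forall>x. nonzero_vec n x \<longrightarrow> (\<forall>q::nat. q \<ge> 2 \<longrightarrow>
            moment m n q x \<le> estar_moment m (l0 n x) q
          \<and> ((\<forall>j<n. \<forall>k<n. x j = x k) \<longrightarrow> moment m n q x = estar_moment m (l0 n x) q)))"
proof (intro conjI allI impI)
  fix q :: nat
  show "moment m n q x = moment m n q y"
    if "nonzero_vec n x" "\<forall>j<n. (x j)\<^sup>2 = (y j)\<^sup>2" for x y
  proof (rule moment_sq[OF assms(1) that(1) _ that(2)])
    show "nonzero_vec n y" using that by (auto simp: nonzero_vec_def) (metis power_zero_numeral zero_eq_power2)
  qed
  show "\<exists>P. poly_fun n P \<and> (\<forall>x. nonzero_vec n x \<longrightarrow>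
                    (\<Sum>j<n. (x j)\<^sup>2) ^ q * moment m n q x = P (\<lambda>j. (x j)\<^sup>2))"
    by (rule poly_part[OF assms(1)])
  show "schur_concave_on n (sq_domain n) (\<lambda>a. moment m n q (\<lambda>j. sqrt (a j)))"
    by (rule schur[OF assms(1)])
next
  fix x and q :: nat assume nz: "nonzero_vec n x" and q: "2 \<le> q"
  show "moment m n q x \<le> estar_moment m (l0 n x) q" by (rule part_b[OF assms(1) nz])
  show "moment m n q x = estar_moment m (l0 n x) q" if "\<forall>j<n. \<forall>k<n. x j = x k"
    by (rule part_b_eq[OF assms(1) nz that])
qed


end
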